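(* Let $(\mathcal{N},r)$ be a ranked $X$-cactus. Then $\mathcal{S}_i(\mathcal{N})\prec\mathcal{S}_j(\mathcal{N})$ for all $0\le i<j\le\sigma(r)$, and $\mathcal{S}_{\sigma(r)}(\mathcal{N})=\{(X,\emptyset)\}$.
   Context: Let $X$ be a finite non-empty set. A rooted DAG $N=(V,A)$ is a finite directed acyclic graph with a vertex $\rho$ of indegree $0$ (the root) from which every vertex is reachable. Leaf: outdegree $0$; tree vertex: indegree $\le1$; reticulation vertex: indegree $\ge 2$; if $(u,v)\in A$, $u$ is a parent of $v$ and $v$ a child of $u$. A reticulation cycle consists of two distinct directed paths with the same start and end vertex and no other common vertices. A rooted $X$-cactus $\mathcal{N}=(N,\varphi)$ is a rooted DAG with $\varphi:X\to V$ such that every vertex has indegree $\le2$, no two distinct reticulation cycles share an arc, and $\varphi(X)$ contains all leaves and all tree vertices of outdegree $1$. A time-stamp function is $t:V\to\mathbb{R}_{\ge0}$ with $t(v)=0$ for $v\in\varphi(X)$; $t(u)>t(v)$ for every arc $(u,v)$ with $v$ not a reticulation vertex; $t(v)=t(p_1)=t(p_2)$ for each reticulation vertex $v$ with parents $p_1,p_2$. $\mathcal{N}$ is temporal if one exists; its size is $\sigma(t)=|t(V)|-1$. A ranking is a time-stamp function $r$ with $r(V)=\{0,\dots,\sigma(r)\}$; a ranked $X$-cactus is a rooted temporal $X$-cactus with a ranking. A vertex $u$ is a descendant of $v$ if some directed path from the root to $u$ contains $v$; strict if every such path contains $v$, non-strict otherwise. $S(u)=\{x:\varphi(x)$ strict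 descendant of $u\}$, $H(u)=\{x:\varphi(x)$ non-strict descendant of $u\}$. For $0\le i\le\sigma(r)$, $V_i=\{u\in V: r(u)\le i$ and $r(p)>i$ for all parents $p$ of $u\}$ and $\mathcal{S}_i(\mathcal{N})=\{(S(u),H(u)):u\in V_i\}\cup\{(H(u),\emptyset):u\in V_i, H(u)\ne\emptyset\}$. A set pair system on $X$ is a set of ordered pairs $(S,H)$ of subsets of $X$ with $S\ne\emptyset$ and $S\cap H=\emptyset$. On set pairs, $(S_1,H_1)\le(S_2,H_2)$ iff they are equal or one of: $S_1\cup H_1\subseteq S_2$; $S_1\cup H_1\subseteq H_2$; $S_1\subsetneq S_2$ and $H_1=H_2\ne\emptyset$. For set pair systems, $\mathcal{S}_1\preceq\mathcal{S}_2$ iff (SP1) for every $(S_1,H_1)\in\mathcal{S}_1$ there is $(S_2,H_2)\in\mathcal{S}_2$ with $(S_1,H_1)\le(S_2,H_2)$, and (SP2) for every $(S_2,H_2)\in\mathcal{S}_2$ with $H_2\ne\emptyset$, if some $(S_1,H_1)\in\mathcal{S}_1$ has $H_1=H_2$, then some such $(S_1,H_1)$ satisfies $(S_1,H_1)\le(S_2,H_2)$. $\mathcal{S}_1\prec\mathcal{S}_2$ means $\mathcal{S}_1\preceq\mathcal{S}_2$ and $\mathcal{S}_1\ne\mathcal{S}_2$. *)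

theory Defs
  imports Complex_Main
begin

definition parents :: "('v \<times> 'v) set \<Rightarrow> 'v \<Rightarrow> 'v set" where
  "parents A v = {u. (u, v) \<in> A}"

definition children :: "('v \<times> 'v) set \<Rightarrow> 'v \<Rightarrow> 'v set" where
  "children A u = {v. (u, v) \<in> A}"

definition indeg :: "('v \<times> 'v) set \<Rightarrow> 'v \<Rightarrow> nat" where
  "indeg A v = card (parents A v)"

definition outdeg :: "('v \<times> 'v) set \<Rightarrow> 'v \<Rightarrow> nat" where
  "outdeg A u = card (children A u)"

definition is_leaf :: "('v \<times> 'v) set \<Rightarrow> 'v \<Rightarrow> bool" where
  "is_leaf A v \<longleftrightarrow> outdeg A v = 0"

definition is_tree_vertex :: "('v \<times> 'v) set \<Rightarrow> 'v \<Rightarrow> bool" where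
  "is_tree_vertex A v \<longleftrightarrow> indeg A v \<le> 1"

definition is_reticulation :: "('v \<times> 'v) set \<Rightarrow> 'v \<Rightarrow> bool" where
  "is_reticulation A v \<longleftrightarrow> indeg A v \<ge> 2"

definition dpath :: "'v set \<Rightarrow> ('v \<times> 'v) set \<Rightarrow> 'v list \<Rightarrow> bool" where
  "dpath V A p \<longleftrightarrow> p \<noteq> [] \<and> set p \<subseteq> V \<and> (\<forall>i. Suc i < length p \<longrightarrow> (p ! i, p ! Suc i) \<in> A)"

definition path_arcs :: "'v list \<Rightarrow> ('v \<times> 'v) set" where
  "path_arcs p = set (zip p (tl p))"

definition rooted_dag :: "'v set \<Rightarrow> ('v \<times> 'v) set \<Rightarrow> 'v \<Rightarrow> bool" where
  "rooted_dag V A \<rho> \<longleftrightarrow> finite V \<and> A \<subseteq> V \<times> V \<and> acyclic A \<and> \<rho> \<in> V \<and>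
     indeg A \<rho> = 0 \<and> (\<forall>v\<in>V. (\<rho>, v) \<in> A\<^sup>*)"

definition ret_cycles :: "'v set \<Rightarrow> ('v \<times> 'v) set \<Rightarrow> ('v \<times> 'v) set set" where
  "ret_cycles V A = {path_arcs P1 \<union> path_arcs P2 | P1 P2.
      dpath V A P1 \<and> dpath V A P2 \<and> P1 \<noteq> P2 \<and> hd P1 = hd P2 \<and> last P1 = last P2 \<and>
      set P1 \<inter> set P2 = {hd P1, last P1}}"

definition rooted_cactus :: "'x set \<Rightarrow> 'v set \<Rightarrow> ('v \<times> 'v) set \<Rightarrow> 'v \<Rightarrow> ('x \<Rightarrow> 'v) \<Rightarrow> bool" where
  "rooted_cactus X V A \<rho> \<phi> \<longleftrightarrow> finite X \<and> X \<noteq> {} \<and> rooted_dag V A \<rho> \<and> \<phi> ` X \<subseteq> V \<and>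
     (\<forall>v\<in>V. indeg A v \<le> 2) \<and>
     (\<forall>C1\<in>ret_cycles V A. \<forall>C2\<in>ret_cycles V A. C1 \<noteq> C2 \<longrightarrow> C1 \<inter> C2 = {}) \<and>
     (\<forall>v\<in>V. is_leaf A v \<or> (is_tree_vertex A v \<and> outdeg A v = 1) \<longrightarrow> v \<in> \<phi> ` X)"

definition time_stamp :: "'x set \<Rightarrow> 'v set \<Rightarrow> ('v \<times> 'v) set \<Rightarrow> ('x \<Rightarrow> 'v) \<Rightarrow> ('v \<Rightarrow> real) \<Rightarrow> bool" where
  "time_stamp X V A \<phi> t \<longleftrightarrow> (\<forall>v\<in>V. t v \<ge> 0) \<and> (\<forall>x\<in>X. t (\<phi> x) = 0) \<and>
     (\<forall>(u, v)\<in>A. \<not> is_reticulation A v \<longrightarrow> t u > t v) \<and>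
     (\<forall>v\<in>V. is_reticulation A v \<longrightarrow> (\<forall>p\<in>parents A v. t p = t v))"

definition size_ts :: "'v set \<Rightarrow> ('v \<Rightarrow> real) \<Rightarrow> nat" where
  "size_ts V t = card (t ` V) - 1"

definition ranking :: "'x set \<Rightarrow> 'v set \<Rightarrow> ('v \<times> 'v) set \<Rightarrow> ('x \<Rightarrow> 'v) \<Rightarrow> ('v \<Rightarrow> real) \<Rightarrow> bool" where
  "ranking X V A \<phi> r \<longleftrightarrow> time_stamp X V A \<phi> r \<and> r ` V = real ` {0..size_ts V r}"

definition ranked_cactus :: "'x set \<Rightarrow> 'v set \<Rightarrow> ('v \<times> 'v) set \<Rightarrow> 'v \<Rightarrow> ('x \<Rightarrow> 'v) \<Rightarrow> ('v \<Rightarrow> real) \<Rightarrow> bool" where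
  "ranked_cactus X V A \<rho> \<phi> r \<longleftrightarrow> rooted_cactus X V A \<rho> \<phi> \<and> ranking X V A \<phi> r"

definition root_paths :: "'v set \<Rightarrow> ('v \<times> 'v) set \<Rightarrow> 'v \<Rightarrow> 'v \<Rightarrow> 'v list set" where
  "root_paths V A \<rho> u = {p. dpath V A p \<and> hd p = \<rho> \<and> last p = u}"

text \<open>descendant V A rho u v: u is a descendant of v.\<close>
definition descendant :: "'v set \<Rightarrow> ('v \<times> 'v) set \<Rightarrow> 'v \<Rightarrow> 'v \<Rightarrow> 'v \<Rightarrow> bool" where
  "descendant V A \<rho> u v \<longleftrightarrow> (\<exists>p\<in>root_paths V A \<rho> u. v \<in> set p)"

definition strict_descendant :: "'v set \<Rightarrow> ('v \<times> 'v) set \<Rightarrow> 'v \<Rightarrow> 'v \<Rightarrow> 'v \<Rightarrow> bool" where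
  "strict_descendant V A \<rho> u v \<longleftrightarrow> descendant V A \<rho> u v \<and> (\<forall>p\<in>root_paths V A \<rho> u. v \<in> set p)"

definition nonstrict_descendant :: "'v set \<Rightarrow> ('v \<times> 'v) set \<Rightarrow> 'v \<Rightarrow> 'v \<Rightarrow> 'v \<Rightarrow> bool" where
  "nonstrict_descendant V A \<rho> u v \<longleftrightarrow> descendant V A \<rho> u v \<and> \<not> strict_descendant V A \<rho> u v"

definition Sset :: "'x set \<Rightarrow> 'v set \<Rightarrow> ('v \<times> 'v) set \<Rightarrow> 'v \<Rightarrow> ('x \<Rightarrow> 'v) \<Rightarrow> 'v \<Rightarrow> 'x set" where
  "Sset X V A \<rho> \<phi> u = {x\<in>X. strict_descendant V A \<rho> (\<phi> x) u}"

definition Hset :: "'x set \<Rightarrow> 'v set \<Rightarrow> ('v \<times> 'v) set \<Rightarrow> 'v \<Rightarrow> ('x \<Rightarrow> 'v) \<Rightarrow> 'v \<Rightarrow> 'x set" where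
  "Hset X V A \<rho> \<phi> u = {x\<in>X. nonstrict_descendant V A \<rho> (\<phi> x) u}"

definition Vlevel :: "'v set \<Rightarrow> ('v \<times> 'v) set \<Rightarrow> ('v \<Rightarrow> real) \<Rightarrow> nat \<Rightarrow> 'v set" where
  "Vlevel V A r i = {u\<in>V. r u \<le> real i \<and> (\<forall>p\<in>parents A u. r p > real i)}"

definition SPS :: "'x set \<Rightarrow> 'v set \<Rightarrow> ('v \<times> 'v) set \<Rightarrow> 'v \<Rightarrow> ('x \<Rightarrow> 'v) \<Rightarrow> ('v \<Rightarrow> real) \<Rightarrow> nat \<Rightarrow> ('x set \<times> 'x set) set" where
  "SPS X V A \<rho> \<phi> r i =
     {(Sset X V A \<rho> \<phi> u, Hset X V A \<rho> \<phi> u) | u. u \<in> Vlevel V A r i} \<union>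
     {(Hset X V A \<rho> \<phi> u, {}) | u. u \<in> Vlevel V A r i \<and> Hset X V A \<rho> \<phi> u \<noteq> {}}"

definition sp_le :: "'x set \<times> 'x set \<Rightarrow> 'x set \<times> 'x set \<Rightarrow> bool" where
  "sp_le P1 P2 \<longleftrightarrow> (case P1 of (S1, H1) \<Rightarrow> case P2 of (S2, H2) \<Rightarrow>
     P1 = P2 \<or> S1 \<union> H1 \<subseteq> S2 \<or> S1 \<union> H1 \<subseteq> H2 \<or> (S1 \<subset> S2 \<and> H1 = H2 \<and> H2 \<noteq> {}))"

definition sps_le :: "('x set \<times> 'x set) set \<Rightarrow> ('x set \<times> 'x set) set \<Rightarrow> bool" where
  "sps_le \<S>1 \<S>2 \<longleftrightarrow>
     (\<forall>P1\<in>\<S>1. \<exists>P2\<in>\<S>2. sp_le P1 P2) \<and>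
     (\<forall>(S2, H2)\<in>\<S>2. H2 \<noteq> {} \<longrightarrow>
        (\<exists>(S1, H1)\<in>\<S>1. H1 = H2) \<longrightarrow> (\<exists>(S1, H1)\<in>\<S>1. H1 = H2 \<and> sp_le (S1, H1) (S2, H2)))"

definition sps_less :: "('x set \<times> 'x set) set \<Rightarrow> ('x set \<times> 'x set) set \<Rightarrow> bool" where
  "sps_less \<S>1 \<S>2 \<longleftrightarrow> sps_le \<S>1 \<S>2 \<and> \<S>1 \<noteq> \<S>2"

end

theory Submission
  imports Defs
begin



lemma dpath_Cons:
  "dpath V A (x # p) \<longleftrightarrow> x \<in> V \<and> (p = [] \<or> ((x, hd p) \<in> A \<and> dpath V A p))"
proof
  assume d: "dpath V A (x # p)"
  show "x \<in> V \<and> (p = [] \<or> ((x, hd p) \<in> A \<and> dpath V A p))"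
  proof (cases p)
    case Nil then show ?thesis using d by (auto simp: dpath_def)
  next
    case (Cons y q)
    have "Suc 0 < length (x # p)" using Cons by simp
    then have "((x # p) ! 0, (x # p) ! Suc 0) \<in> A" using d unfolding dpath_def by blast
    then have "(x, y) \<in> A" using Cons by simp
    moreover have "dpath V A p" unfolding dpath_def
    proof (intro conjI allI impI)
      show "p \<noteq> []" using Cons by simp
      show "set p \<subseteq> V" using d by (auto simp: dpath_def)
      fix i assume "Suc i < length p"
      then have "Suc (Suc i) < length (x # p)" by simp
      then have "((x#p) ! Suc i, (x#p) ! Suc (Suc i)) \<in> A" using d unfolding dpath_def by blast
      then show "(p ! i, p ! Suc i) \<in> A" by simp
    qed
    ultimately show ?thesis using d Cons by (auto simp: dpath_def)
  qed
next
  assume h: "x \<in> V \<and> (p = [] \<or> ((x, hd p) \<in> A \<and> dpath V A p))"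
  show "dpath V A (x # p)" unfolding dpath_def
  proof (intro conjI allI impI)
    show "x # p \<noteq> []" by simp
    show "set (x # p) \<subseteq> V" using h by (auto simp: dpath_def)
    fix i assume i: "Suc i < length (x # p)"
    show "((x # p) ! i, (x # p) ! Suc i) \<in> A"
    proof (cases i)
      case 0 then show ?thesis using h i by (cases p) (auto simp: dpath_def)
    next
      case (Suc i') then show ?thesis using h i by (auto simp: dpath_def)
    qed
  qed
qed

lemma dpath_reach:
  assumes "dpath V A p" "i \<le> j" "j < length p"
  shows "(p ! i, p ! j) \<in> A\<^sup>*"
  using assms(2,3)
proof (induction j)
  case 0 then show ?case by simp
next
  case (Suc j)
  show ?case
  proof (cases "i = Suc j")
    case True then show ?thesis by simp
  next
    case False
    then have "(p ! i, p ! j) \<in> A\<^sup>*" using Suc by simp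
    moreover have "(p ! j, p ! Suc j) \<in> A" using assms(1) Suc.prems unfolding dpath_def by blast
    ultimately show ?thesis by simp
  qed
qed

lemma dpath_trancl:
  assumes "dpath V A p" "i < j" "j < length p"
  shows "(p ! i, p ! j) \<in> A\<^sup>+"
proof -
  have "(p ! i, p ! (j - 1)) \<in> A\<^sup>*" using dpath_reach[OF assms(1)] assms by simp
  moreover have "(p ! (j - 1), p ! j) \<in> A" using assms unfolding dpath_def
    by (metis Suc_pred' less_nat_zero_code not_gr_zero)
  ultimately show ?thesis by simp
qed

lemma dpath_distinct:
  assumes "acyclic A" "dpath V A p"
  shows "distinct p"
  unfolding distinct_conv_nth
proof (intro allI impI)
  fix i j assume ij: "i < length p" "j < length p" "i \<noteq> j"
  show "p ! i \<noteq> p ! j"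
  proof
    assume eq: "p ! i = p ! j"
    { fix a b assume "a < b" "b < length p" "p ! a = p ! b"
      then have "(p ! a, p ! b) \<in> A\<^sup>+" using dpath_trancl[OF assms(2)] by blast
      then have "(p ! a, p ! a) \<in> A\<^sup>+" using \<open>p ! a = p ! b\<close> by simp
      then have False using assms(1) unfolding acyclic_def by blast } note * = this
    show False
    proof (cases "i < j")
      case True then show False using ij eq * by blast
    next
      case False then have "j < i" using ij by simp
      then show False using ij eq * by metis
    qed
  qed
qed

lemma dpath_ne: "dpath V A p \<Longrightarrow> p \<noteq> []" by (simp add: dpath_def)

lemma dpath_hd_last:
  assumes "dpath V A p" shows "(hd p, last p) \<in> A\<^sup>*"
  using dpath_reach[OF assms, of 0 "length p - 1"] dpath_ne[OF assms]
  by (simp add: hd_conv_nth last_conv_nth)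

lemma dpath_mem_reach:
  assumes "dpath V A p" "v \<in> set p"
  shows "(hd p, v) \<in> A\<^sup>*" "(v, last p) \<in> A\<^sup>*"
proof -
  obtain i where i: "i < length p" "p ! i = v" using assms(2) by (metis in_set_conv_nth)
  have ne: "p \<noteq> []" using dpath_ne[OF assms(1)] .
  show "(hd p, v) \<in> A\<^sup>*" using dpath_reach[OF assms(1), of 0 i] i ne by (simp add: hd_conv_nth)
  show "(v, last p) \<in> A\<^sup>*" using dpath_reach[OF assms(1), of i "length p - 1"] i ne by (simp add: last_conv_nth)
qed

lemma reach_dpath:
  assumes "(a, b) \<in> A\<^sup>*" "a \<in> V" "A \<subseteq> V \<times> V"
  shows "\<exists>p. dpath V A p \<and> hd p = a \<and> last p = b"
  using assms(1)
proof (induction rule: rtrancl_induct)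
  case base then show ?case using assms(2) by (intro exI[of _ "[a]"]) (simp add: dpath_def)
next
  case (step b c)
  then obtain p where p: "dpath V A p" "hd p = a" "last p = b" by blast
  have cV: "c \<in> V" using step assms(3) by blast
  have "dpath V A (p @ [c])" unfolding dpath_def
  proof (intro conjI allI impI)
    show "p @ [c] \<noteq> []" by simp
    show "set (p @ [c]) \<subseteq> V" using p cV by (auto simp: dpath_def)
    fix i assume i: "Suc i < length (p @ [c])"
    show "((p @ [c]) ! i, (p @ [c]) ! Suc i) \<in> A"
    proof (cases "Suc i < length p")
      case True then show ?thesis using p(1) by (simp add: nth_append dpath_def)
    next
      case False
      then have "i = length p - 1" "p \<noteq> []" using i p(1) by (auto simp: dpath_def)
      then show ?thesis using step(2) p(3) by (simp add: nth_append last_conv_nth)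
    qed
  qed
  then show ?case using p dpath_ne[OF p(1)] by (intro exI[of _ "p @ [c]"]) simp
qed

lemma dpath_append:
  assumes "dpath V A p" "dpath V A q" "last p = hd q"
  shows "dpath V A (p @ tl q) \<and> hd (p @ tl q) = hd p \<and> last (p @ tl q) = last q \<and>
         set (p @ tl q) = set p \<union> set q"
  using assms
proof (induction p)
  case Nil then show ?case by (simp add: dpath_def)
next
  case (Cons x p)
  have qne: "q \<noteq> []" using Cons.prems(2) by (simp add: dpath_def)
  show ?case
  proof (cases p)
    case Nil
    then have "q = x # tl q" using Cons.prems(3) qne by (cases q) auto
    then have e: "(x # p) @ tl q = q" using Nil by simp
    have xq: "x \<in> set q" using \<open>q = x # tl q\<close> by (metis list.set_intros(1))
    have "hd q = x" using \<open>q = x # tl q\<close> by (metis list.sel(1))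
    then show ?thesis using e xq Nil Cons.prems(2) by auto
  next
    case (Cons y p')
    have dx: "x \<in> V" "(x, hd p) \<in> A" "dpath V A p" using Cons.prems(1) Cons by (auto simp: dpath_Cons)
    have IH: "dpath V A (p @ tl q) \<and> hd (p @ tl q) = hd p \<and> last (p @ tl q) = last q \<and> set (p @ tl q) = set p \<union> set q"
      using Cons.IH dx(3) Cons.prems(2,3) Cons by simp
    have "dpath V A (x # (p @ tl q))" using dx IH by (simp add: dpath_Cons)
    then show ?thesis using IH Cons by auto
  qed
qed

lemma dpath_take:
  assumes "dpath V A p" "i < length p"
  shows "dpath V A (take (Suc i) p)" "hd (take (Suc i) p) = hd p" "last (take (Suc i) p) = p ! i"
        "set (take (Suc i) p) \<subseteq> set p"
proof -
  show "dpath V A (take (Suc i) p)" using assms unfolding dpath_def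
    by (auto dest: in_set_takeD)
  show "hd (take (Suc i) p) = hd p" using assms by (cases p) auto
  have "take (Suc i) p \<noteq> []" using assms by (cases p) auto
  moreover have "length (take (Suc i) p) = Suc i" using assms by simp
  ultimately have "last (take (Suc i) p) = take (Suc i) p ! i" by (simp add: last_conv_nth)
  then show "last (take (Suc i) p) = p ! i" by simp
  show "set (take (Suc i) p) \<subseteq> set p" by (rule set_take_subset)
qed

lemma dpath_drop:
  assumes "dpath V A p" "i < length p"
  shows "dpath V A (drop i p)" "hd (drop i p) = p ! i" "last (drop i p) = last p"
        "set (drop i p) \<subseteq> set p"
proof -
  show "dpath V A (drop i p)" using assms unfolding dpath_def
    by (auto dest: in_set_dropD)
  show "hd (drop i p) = p ! i" using assms by (simp add: hd_drop_conv_nth)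
  show "last (drop i p) = last p" using assms by simp
  show "set (drop i p) \<subseteq> set p" by (rule set_drop_subset)
qed

lemma path_arcs_iff:
  "(x, y) \<in> path_arcs p \<longleftrightarrow> (\<exists>t. Suc t < length p \<and> p ! t = x \<and> p ! Suc t = y)"
  unfolding path_arcs_def in_set_zip
  apply (auto simp: nth_tl)
  apply (rule_tac x=n in exI, simp)
  done

lemma path_arcs_sub: "dpath V A p \<Longrightarrow> path_arcs p \<subseteq> A"
  by (auto simp: path_arcs_iff dpath_def)




definition seg :: "'a list \<Rightarrow> nat \<Rightarrow> nat \<Rightarrow> 'a list" where
  "seg p a b = map (\<lambda>t. p ! t) [a..<Suc b]"

lemma seg_length: "length (seg p a b) = Suc b - a" by (simp add: seg_def del: upt_Suc)
lemma seg_nth: "t < Suc b - a \<Longrightarrow> seg p a b ! t = p ! (a + t)" by (simp add: seg_def del: upt_Suc)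
lemma seg_ne: "a \<le> b \<Longrightarrow> seg p a b \<noteq> []" by (simp add: seg_def)
lemma seg_hd: "a \<le> b \<Longrightarrow> hd (seg p a b) = p ! a" by (simp add: seg_def upt_conv_Cons del: upt_Suc)
lemma seg_last: "a \<le> b \<Longrightarrow> last (seg p a b) = p ! b" by (simp add: seg_def)
lemma seg_set: "set (seg p a b) = (\<lambda>t. p ! t) ` {a..b}" by (auto simp: seg_def)

lemma seg_set_sub: "b < length p \<Longrightarrow> set (seg p a b) \<subseteq> set p"
  by (auto simp: seg_set)

lemma seg_dpath:
  assumes "dpath V A p" "a \<le> b" "b < length p"
  shows "dpath V A (seg p a b)"
  unfolding dpath_def
proof (intro conjI allI impI)
  show "seg p a b \<noteq> []" using assms by (simp add: seg_ne)
  show "set (seg p a b) \<subseteq> V" using assms seg_set_sub[of b p a] by (auto simp: dpath_def)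
  fix i assume i: "Suc i < length (seg p a b)"
  then have "Suc (a + i) < length p" using assms by (simp add: seg_length)
  then have "(p ! (a + i), p ! Suc (a + i)) \<in> A" using assms(1) by (simp add: dpath_def)
  then show "(seg p a b ! i, seg p a b ! Suc i) \<in> A" using i by (simp add: seg_nth seg_length)
qed

lemma seg_arc:
  assumes "a \<le> t" "t < b"
  shows "(p ! t, p ! Suc t) \<in> path_arcs (seg p a b)"
  unfolding path_arcs_iff
proof (intro exI[of _ "t - a"] conjI)
  show "Suc (t - a) < length (seg p a b)" using assms by (simp add: seg_length)
  show "seg p a b ! (t - a) = p ! t" using assms by (simp add: seg_nth)
  show "seg p a b ! Suc (t - a) = p ! Suc t" using assms by (simp add: seg_nth)
qed

definition cyc_data :: "'v set \<Rightarrow> ('v \<times> 'v) set \<Rightarrow> 'v list \<Rightarrow> 'v list \<Rightarrow> bool" where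
  "cyc_data V A Q1 Q2 \<longleftrightarrow> dpath V A Q1 \<and> dpath V A Q2 \<and> Q1 \<noteq> Q2 \<and> hd Q1 = hd Q2 \<and>
      last Q1 = last Q2 \<and> set Q1 \<inter> set Q2 = {hd Q1, last Q1}"

lemma cyc_data_ret: "cyc_data V A Q1 Q2 \<Longrightarrow> path_arcs Q1 \<union> path_arcs Q2 \<in> ret_cycles V A"
  unfolding ret_cycles_def cyc_data_def
  by (rule CollectI, rule exI[of _ Q1], rule exI[of _ Q2]) simp

lemma cyc_data_sym: "cyc_data V A Q1 Q2 \<Longrightarrow> cyc_data V A Q2 Q1"
  unfolding cyc_data_def by (simp add: Int_commute) (metis)

lemma CYC:
  assumes acy: "acyclic A" and d1: "dpath V A P1" and d2: "dpath V A P2"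
    and hd: "hd P1 = hd P2" and lst: "last P1 = last P2"
    and k: "k < length P1" "P1 ! k \<notin> set P2"
  shows "\<exists>a b a' b'. a < k \<and> k < b \<and> b < length P1 \<and> a' < b' \<and> b' < length P2 \<and>
     P1 ! a = P2 ! a' \<and> P1 ! b = P2 ! b' \<and> cyc_data V A (seg P1 a b) (seg P2 a' b')"
proof -
  have ne1: "P1 \<noteq> []" and ne2: "P2 \<noteq> []" using d1 d2 by (auto simp: dpath_def)
  have h0: "P1 ! 0 \<in> set P2" using hd ne1 ne2 by (metis hd_conv_nth hd_in_set)
  have hl: "P1 ! (length P1 - 1) \<in> set P2" using lst ne1 ne2 by (metis last_conv_nth last_in_set)
  have k0: "0 < k" using k h0 by (cases k) auto
  have kl: "k < length P1 - 1" using k hl by (cases "k = length P1 - 1") auto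
  define a where "a = (GREATEST t. t < k \<and> P1 ! t \<in> set P2)"
  have aP: "a < k \<and> P1 ! a \<in> set P2" unfolding a_def
    by (rule GreatestI_nat[of _ 0 k]) (use k0 h0 in auto)
  have aG: "\<And>t. t < k \<Longrightarrow> P1 ! t \<in> set P2 \<Longrightarrow> t \<le> a" unfolding a_def
    by (rule Greatest_le_nat[of _ _ k]) auto
  define b where "b = (LEAST t. k < t \<and> t < length P1 \<and> P1 ! t \<in> set P2)"
  have bP: "k < b \<and> b < length P1 \<and> P1 ! b \<in> set P2" unfolding b_def
    by (rule LeastI[of _ "length P1 - 1"]) (use kl hl in auto)
  have bL: "\<And>t. k < t \<Longrightarrow> t < length P1 \<Longrightarrow> P1 ! t \<in> set P2 \<Longrightarrow> b \<le> t" unfolding b_def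
    by (rule Least_le) auto
  have inter: "\<And>t. a < t \<Longrightarrow> t < b \<Longrightarrow> P1 ! t \<notin> set P2"
  proof -
    fix t assume t: "a < t" "t < b"
    show "P1 ! t \<notin> set P2"
    proof
      assume m: "P1 ! t \<in> set P2"
      consider "t < k" | "t = k" | "k < t" by arith
      then show False
      proof cases
        case 1 then show False using aG[OF 1 m] t by simp
      next
        case 2 then show False using k m by simp
      next
        case 3 then show False using bL[OF 3 _ m] t bP by simp
      qed
    qed
  qed
  obtain a' where a': "a' < length P2" "P2 ! a' = P1 ! a" using aP by (metis in_set_conv_nth)
  obtain b' where b': "b' < length P2" "P2 ! b' = P1 ! b" using bP by (metis in_set_conv_nth)
  have dis1: "distinct P1" and dis2: "distinct P2" using dpath_distinct acy d1 d2 by auto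
  have ab: "a < b" using aP bP by simp
  have neq: "P1 ! a \<noteq> P1 ! b" using dis1 ab bP by (simp add: nth_eq_iff_index_eq)
  have a'b': "a' < b'"
  proof (rule ccontr)
    assume "\<not> a' < b'"
    then have "b' < a'" using neq a' b' by (metis nat_neq_iff)
    then have "(P2 ! b', P2 ! a') \<in> A\<^sup>+" using dpath_trancl[OF d2 _ a'(1)] by blast
    then have "(P1 ! b, P1 ! a) \<in> A\<^sup>+" using a' b' by simp
    moreover have "(P1 ! a, P1 ! b) \<in> A\<^sup>+" using dpath_trancl[OF d1 ab] bP by simp
    ultimately have "(P1 ! a, P1 ! a) \<in> A\<^sup>+" by simp
    then show False using acy unfolding acyclic_def by blast
  qed
  let ?Q1 = "seg P1 a b" and ?Q2 = "seg P2 a' b'"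
  have cd: "cyc_data V A ?Q1 ?Q2" unfolding cyc_data_def
  proof (intro conjI)
    show "dpath V A ?Q1" using seg_dpath[OF d1] ab bP by simp
    show "dpath V A ?Q2" using seg_dpath[OF d2] a'b' b' by simp
    have "P1 ! k \<in> set ?Q1" using aP bP by (auto simp: seg_set)
    moreover have "P1 ! k \<notin> set ?Q2" using k seg_set_sub[of b' P2 a'] b' by auto
    ultimately show "?Q1 \<noteq> ?Q2" by metis
    show "hd ?Q1 = hd ?Q2" using ab a'b' a' by (simp add: seg_hd)
    show "last ?Q1 = last ?Q2" using ab a'b' b' by (simp add: seg_last)
    show "set ?Q1 \<inter> set ?Q2 = {hd ?Q1, last ?Q1}"
    proof
      show "set ?Q1 \<inter> set ?Q2 \<subseteq> {hd ?Q1, last ?Q1}"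
      proof
        fix v assume v: "v \<in> set ?Q1 \<inter> set ?Q2"
        then obtain t where t: "a \<le> t" "t \<le> b" "v = P1 ! t" by (auto simp: seg_set)
        have "v \<in> set P2" using v seg_set_sub[of b' P2 a'] b' by auto
        then have "\<not> (a < t \<and> t < b)" using inter t by blast
        then have "t = a \<or> t = b" using t by arith
        then show "v \<in> {hd ?Q1, last ?Q1}" using t ab by (auto simp: seg_hd seg_last)
      qed
      have "P1 ! a \<in> (!) P2 ` {a'..b'}" using a'b' a' by (intro rev_image_eqI[of a']) auto
      moreover have "P1 ! b \<in> (!) P2 ` {a'..b'}" using a'b' b' by (intro rev_image_eqI[of b']) auto
      ultimately show "{hd ?Q1, last ?Q1} \<subseteq> set ?Q1 \<inter> set ?Q2"
        using ab by (auto simp: seg_hd seg_last seg_set)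
    qed
  qed
  show ?thesis using aP bP a'b' b' a' cd by (intro exI[of _ a] exI[of _ b] exI[of _ a'] exI[of _ b']) auto
qed

lemma arcs_pred_unique:
  assumes "distinct Q" "(x1, v) \<in> path_arcs Q" "(x2, v) \<in> path_arcs Q"
  shows "x1 = x2"
proof -
  obtain t1 where t1: "Suc t1 < length Q" "Q ! t1 = x1" "Q ! Suc t1 = v" using assms(2) by (auto simp: path_arcs_iff)
  obtain t2 where t2: "Suc t2 < length Q" "Q ! t2 = x2" "Q ! Suc t2 = v" using assms(3) by (auto simp: path_arcs_iff)
  have "Q ! Suc t1 = Q ! Suc t2" using t1 t2 by simp
  then have "Suc t1 = Suc t2" using t1(1) t2(1) by (subst (asm) nth_eq_iff_index_eq[OF assms(1)]) auto
  then show ?thesis using t1 t2 by simp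
qed

lemma arcs_succ_unique:
  assumes "distinct Q" "(v, y1) \<in> path_arcs Q" "(v, y2) \<in> path_arcs Q"
  shows "y1 = y2"
proof -
  obtain t1 where t1: "Suc t1 < length Q" "Q ! t1 = v" "Q ! Suc t1 = y1" using assms(2) by (auto simp: path_arcs_iff)
  obtain t2 where t2: "Suc t2 < length Q" "Q ! t2 = v" "Q ! Suc t2 = y2" using assms(3) by (auto simp: path_arcs_iff)
  have "Q ! t1 = Q ! t2" using t1 t2 by simp
  then have "t1 = t2" using t1(1) t2(1) by (subst (asm) nth_eq_iff_index_eq[OF assms(1)]) auto
  then show ?thesis using t1 t2 by simp
qed

lemma arc_tgt_not_hd:
  assumes "distinct Q" "(x, v) \<in> path_arcs Q" shows "v \<noteq> hd Q"
proof -
  obtain t where t: "Suc t < length Q" "Q ! t = x" "Q ! Suc t = v" using assms(2) by (auto simp: path_arcs_iff)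
  have "Q ! Suc t \<noteq> Q ! 0" using t by (subst nth_eq_iff_index_eq[OF assms(1)]) auto
  moreover have "Q \<noteq> []" using t by auto
  ultimately show ?thesis using t by (simp add: hd_conv_nth)
qed

lemma arc_src_not_last:
  assumes "distinct Q" "(v, y) \<in> path_arcs Q" shows "v \<noteq> last Q"
proof -
  obtain t where t: "Suc t < length Q" "Q ! t = v" "Q ! Suc t = y" using assms(2) by (auto simp: path_arcs_iff)
  have "Q ! t \<noteq> Q ! (length Q - 1)" using t by (subst nth_eq_iff_index_eq[OF assms(1)]) auto
  moreover have "Q \<noteq> []" using t by auto
  ultimately show ?thesis using t by (simp add: last_conv_nth)
qed

lemma arc_mem: "(x, v) \<in> path_arcs Q \<Longrightarrow> x \<in> set Q \<and> v \<in> set Q"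
  by (auto simp: path_arcs_iff)

lemma I1:
  assumes acy: "acyclic A" and cd: "cyc_data V A Q1 Q2"
    and e1: "(x1, v) \<in> path_arcs Q1 \<union> path_arcs Q2" and e2: "(x2, v) \<in> path_arcs Q1 \<union> path_arcs Q2"
    and ne: "x1 \<noteq> x2"
  shows "v = last Q1"
proof -
  have d1: "distinct Q1" and d2: "distinct Q2" using cd acy dpath_distinct unfolding cyc_data_def by blast+
  have "\<exists>y1 y2. (y1, v) \<in> path_arcs Q1 \<and> (y2, v) \<in> path_arcs Q2"
  proof (cases "(x1, v) \<in> path_arcs Q1")
    case True
    then have "(x2, v) \<notin> path_arcs Q1" using arcs_pred_unique[OF d1] ne by metis
    then show ?thesis using True e2 by blast
  next
    case False
    then have "(x1, v) \<in> path_arcs Q2" using e1 by blast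
    moreover have "(x2, v) \<notin> path_arcs Q2" using arcs_pred_unique[OF d2] ne calculation by metis
    ultimately show ?thesis using e2 by blast
  qed
  then obtain y1 y2 where y: "(y1, v) \<in> path_arcs Q1" "(y2, v) \<in> path_arcs Q2" by blast
  have "v \<in> set Q1 \<inter> set Q2" using arc_mem[OF y(1)] arc_mem[OF y(2)] by blast
  then have "v = hd Q1 \<or> v = last Q1" using cd unfolding cyc_data_def by blast
  moreover have "v \<noteq> hd Q1" using arc_tgt_not_hd[OF d1 y(1)] .
  ultimately show ?thesis by blast
qed

lemma I2:
  assumes acy: "acyclic A" and cd: "cyc_data V A Q1 Q2"
    and e1: "(v, y1) \<in> path_arcs Q1 \<union> path_arcs Q2" and e2: "(v, y2) \<in> path_arcs Q1 \<union> path_arcs Q2"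
    and ne: "y1 \<noteq> y2"
  shows "v = hd Q1"
proof -
  have d1: "distinct Q1" and d2: "distinct Q2" using cd acy dpath_distinct unfolding cyc_data_def by blast+
  have "\<exists>z1 z2. (v, z1) \<in> path_arcs Q1 \<and> (v, z2) \<in> path_arcs Q2"
  proof (cases "(v, y1) \<in> path_arcs Q1")
    case True
    then have "(v, y2) \<notin> path_arcs Q1" using arcs_succ_unique[OF d1] ne by metis
    then show ?thesis using True e2 by blast
  next
    case False
    then have "(v, y1) \<in> path_arcs Q2" using e1 by blast
    moreover have "(v, y2) \<notin> path_arcs Q2" using arcs_succ_unique[OF d2] ne calculation by metis
    ultimately show ?thesis using e2 by blast
  qed
  then obtain z1 z2 where y: "(v, z1) \<in> path_arcs Q1" "(v, z2) \<in> path_arcs Q2" by blast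
  have "v \<in> set Q1 \<inter> set Q2" using arc_mem[OF y(1)] arc_mem[OF y(2)] by blast
  then have "v = hd Q1 \<or> v = last Q1" using cd unfolding cyc_data_def by blast
  moreover have "v \<noteq> last Q1" using arc_src_not_last[OF d1 y(1)] .
  ultimately show ?thesis by blast
qed

lemma distinct_hd_last_len1:
  assumes "distinct Q" "Q \<noteq> []" "hd Q = last Q" shows "Q = [hd Q]"
proof -
  have "Q ! 0 = Q ! (length Q - 1)" using assms by (simp add: hd_conv_nth last_conv_nth)
  then have "length Q - 1 = 0" using assms(1,2) by (simp add: nth_eq_iff_index_eq)
  then have "length Q = 1" using assms(2) by (cases Q) auto
  then show ?thesis using assms(2) by (cases Q) auto
qed

lemma len2_eq: "length Q = 2 \<Longrightarrow> Q = [hd Q, last Q]"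
  by (cases Q; cases "tl Q") auto

lemma cyc_data_len:
  assumes acy: "acyclic A" and cd: "cyc_data V A Q1 Q2"
  shows "hd Q1 \<noteq> last Q1" "2 \<le> length Q1" "2 \<le> length Q2" "3 \<le> length Q1 \<or> 3 \<le> length Q2"
proof -
  have d1: "distinct Q1" and d2: "distinct Q2" and ne1: "Q1 \<noteq> []" and ne2: "Q2 \<noteq> []"
    using cd acy dpath_distinct unfolding cyc_data_def dpath_def by blast+
  have eq: "hd Q1 = hd Q2" "last Q1 = last Q2" "Q1 \<noteq> Q2" using cd unfolding cyc_data_def by auto
  show hl: "hd Q1 \<noteq> last Q1"
  proof
    assume h: "hd Q1 = last Q1"
    then have "Q1 = [hd Q1]" using distinct_hd_last_len1[OF d1 ne1] by simp
    moreover have "Q2 = [hd Q2]" using distinct_hd_last_len1[OF d2 ne2] h eq by simp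
    ultimately show False using eq by metis
  qed
  show l1: "2 \<le> length Q1" using hl ne1 by (cases Q1) (auto split: if_splits simp: Suc_le_eq)
  have "hd Q2 \<noteq> last Q2" using hl eq by simp
  then show l2: "2 \<le> length Q2" using ne2 by (cases Q2) (auto split: if_splits simp: Suc_le_eq)
  show "3 \<le> length Q1 \<or> 3 \<le> length Q2"
  proof (rule ccontr)
    assume "\<not> (3 \<le> length Q1 \<or> 3 \<le> length Q2)"
    then have "length Q1 = 2" "length Q2 = 2" using l1 l2 by auto
    then have "Q1 = [hd Q1, last Q1]" "Q2 = [hd Q2, last Q2]" using len2_eq by blast+
    then show False using eq by metis
  qed
qed

lemma I0:
  assumes acy: "acyclic A" and cd: "cyc_data V A Q1 Q2"
  shows "\<exists>x1 x2. x1 \<noteq> x2 \<and> (x1, last Q1) \<in> path_arcs Q1 \<and> (x2, last Q1) \<in> path_arcs Q2"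
proof -
  have d1: "distinct Q1" and d2: "distinct Q2" and ne1: "Q1 \<noteq> []" and ne2: "Q2 \<noteq> []"
    using cd acy dpath_distinct unfolding cyc_data_def dpath_def by blast+
  have eq: "hd Q1 = hd Q2" "last Q1 = last Q2" "Q1 \<noteq> Q2" and int: "set Q1 \<inter> set Q2 = {hd Q1, last Q1}"
    using cd unfolding cyc_data_def by auto
  note L = cyc_data_len[OF acy cd]
  define x1 where "x1 = Q1 ! (length Q1 - 2)"
  define x2 where "x2 = Q2 ! (length Q2 - 2)"
  have a1: "(x1, last Q1) \<in> path_arcs Q1" unfolding path_arcs_iff x1_def
    using L ne1 by (intro exI[of _ "length Q1 - 2"]) (auto simp: last_conv_nth Suc_diff_Suc numeral_2_eq_2)
  have a2: "(x2, last Q1) \<in> path_arcs Q2" unfolding path_arcs_iff x2_def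
    using L eq ne2 by (intro exI[of _ "length Q2 - 2"]) (auto simp: last_conv_nth Suc_diff_Suc numeral_2_eq_2)
  have "x1 \<noteq> x2"
  proof
    assume x: "x1 = x2"
    have "x1 \<in> set Q1 \<inter> set Q2" using arc_mem[OF a1] arc_mem[OF a2] x by blast
    then have "x1 = hd Q1 \<or> x1 = last Q1" using int by blast
    moreover have "x1 \<noteq> last Q1" using arc_src_not_last[OF d1 a1] .
    ultimately have h1: "x1 = hd Q1" by blast
    then have "Q1 ! (length Q1 - 2) = Q1 ! 0" using x1_def L ne1 by (simp add: hd_conv_nth)
    then have "length Q1 - 2 = 0" using L by (subst (asm) nth_eq_iff_index_eq[OF d1]) auto
    then have "length Q1 = 2" using L by simp
    have h2: "x2 = hd Q2" using h1 x eq by simp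
    then have "Q2 ! (length Q2 - 2) = Q2 ! 0" using x2_def L ne2 by (simp add: hd_conv_nth)
    then have "length Q2 - 2 = 0" using L by (subst (asm) nth_eq_iff_index_eq[OF d2]) auto
    then have "length Q2 = 2" using L by simp
    show False using len2_eq \<open>length Q1 = 2\<close> \<open>length Q2 = 2\<close> eq by metis
  qed
  then show ?thesis using a1 a2 by blast
qed




definition domi :: "'v set \<Rightarrow> ('v \<times> 'v) set \<Rightarrow> 'v \<Rightarrow> 'v \<Rightarrow> 'v \<Rightarrow> bool" where
  "domi V A \<rho> u y \<longleftrightarrow> (\<forall>p\<in>root_paths V A \<rho> y. u \<in> set p)"

locale RC =
  fixes X :: "'x set" and V :: "'v set" and A :: "('v \<times> 'v) set" and \<rho> :: 'v
    and \<phi> :: "'x \<Rightarrow> 'v" and r :: "'v \<Rightarrow> real"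
  assumes rc: "ranked_cactus X V A \<rho> \<phi> r"
begin

abbreviation "rp \<equiv> root_paths V A \<rho>"
abbreviation "dm \<equiv> domi V A \<rho>"
definition Lab :: "'v \<Rightarrow> 'x set" where "Lab z = {x\<in>X. (z, \<phi> x) \<in> A\<^sup>*}"
abbreviation "S \<equiv> Sset X V A \<rho> \<phi>"
abbreviation "H \<equiv> Hset X V A \<rho> \<phi>"

lemma cact: "rooted_cactus X V A \<rho> \<phi>" using rc by (simp add: ranked_cactus_def)
lemma rdag: "rooted_dag V A \<rho>" using cact by (simp add: rooted_cactus_def)
lemma finV: "finite V" using rdag by (simp add: rooted_dag_def)
lemma AV: "A \<subseteq> V \<times> V" using rdag by (simp add: rooted_dag_def)
lemma acyc: "acyclic A" using rdag by (simp add: rooted_dag_def)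
lemma rhoV: "\<rho> \<in> V" using rdag by (simp add: rooted_dag_def)
lemma indeg_rho: "indeg A \<rho> = 0" using rdag by (simp add: rooted_dag_def)
lemma reach_all: "v \<in> V \<Longrightarrow> (\<rho>, v) \<in> A\<^sup>*" using rdag by (simp add: rooted_dag_def)
lemma finX: "finite X" using cact by (simp add: rooted_cactus_def)
lemma Xne: "X \<noteq> {}" using cact by (simp add: rooted_cactus_def)
lemma phiV: "x \<in> X \<Longrightarrow> \<phi> x \<in> V" using cact by (auto simp: rooted_cactus_def)
lemma indeg2: "v \<in> V \<Longrightarrow> indeg A v \<le> 2" using cact by (simp add: rooted_cactus_def)
lemma cactus_disj: "C1 \<in> ret_cycles V A \<Longrightarrow> C2 \<in> ret_cycles V A \<Longrightarrow> C1 \<noteq> C2 \<Longrightarrow> C1 \<inter> C2 = {}"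
  using cact unfolding rooted_cactus_def by blast
lemma ret_eq: "C1 \<in> ret_cycles V A \<Longrightarrow> C2 \<in> ret_cycles V A \<Longrightarrow> e \<in> C1 \<Longrightarrow> e \<in> C2 \<Longrightarrow> C1 = C2"
  using cactus_disj by blast
lemma leafcond: "v \<in> V \<Longrightarrow> is_leaf A v \<or> (is_tree_vertex A v \<and> outdeg A v = 1) \<Longrightarrow> v \<in> \<phi> ` X"
  using cact unfolding rooted_cactus_def by blast

lemma ts: "time_stamp X V A \<phi> r" using rc by (simp add: ranked_cactus_def ranking_def)
lemma rank_img: "r ` V = real ` {0..size_ts V r}" using rc by (simp add: ranked_cactus_def ranking_def)
lemma r_nonneg: "v \<in> V \<Longrightarrow> r v \<ge> 0" using ts by (simp add: time_stamp_def)
lemma r_lab: "x \<in> X \<Longrightarrow> r (\<phi> x) = 0" using ts by (simp add: time_stamp_def)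
lemma r_tree_arc: "(u, v) \<in> A \<Longrightarrow> \<not> is_reticulation A v \<Longrightarrow> r v < r u"
  using ts unfolding time_stamp_def by blast
lemma r_ret_arc: "(u, v) \<in> A \<Longrightarrow> is_reticulation A v \<Longrightarrow> r u = r v"
proof -
  assume a: "(u, v) \<in> A" "is_reticulation A v"
  then have "v \<in> V" "u \<in> parents A v" using AV by (auto simp: parents_def)
  then show ?thesis using ts a unfolding time_stamp_def by blast
qed
lemma r_arc: "(u, v) \<in> A \<Longrightarrow> r v \<le> r u"
  using r_tree_arc r_ret_arc by (metis less_imp_le order_refl)
lemma r_reach: "(u, v) \<in> A\<^sup>* \<Longrightarrow> r v \<le> r u"
  by (induction rule: rtrancl_induct) (auto dest: r_arc)

lemma finA: "finite A" using finV AV by (meson finite_SigmaI finite_subset)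
lemma parents_sub: "parents A v \<subseteq> V" using AV by (auto simp: parents_def)
lemma children_sub: "children A v \<subseteq> V" using AV by (auto simp: children_def)
lemma fin_parents: "finite (parents A v)" using parents_sub finV finite_subset by blast
lemma fin_children: "finite (children A v)" using children_sub finV finite_subset by blast

lemma ret_iff: "is_reticulation A v \<longleftrightarrow> 2 \<le> card (parents A v)"
  by (simp add: is_reticulation_def indeg_def)

lemma ret_of_two: "(a, v) \<in> A \<Longrightarrow> (b, v) \<in> A \<Longrightarrow> a \<noteq> b \<Longrightarrow> is_reticulation A v"
proof -
  assume h: "(a, v) \<in> A" "(b, v) \<in> A" "a \<noteq> b"
  then have "{a, b} \<subseteq> parents A v" by (auto simp: parents_def)
  then have "card {a, b} \<le> card (parents A v)" using fin_parents card_mono by blast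
  moreover have "card {a, b} = 2" using h(3) by simp
  ultimately show ?thesis unfolding ret_iff by linarith
qed

lemma nonret_parent: "\<not> is_reticulation A v \<Longrightarrow> (p, v) \<in> A \<Longrightarrow> parents A v = {p}"
proof -
  assume h: "\<not> is_reticulation A v" "(p, v) \<in> A"
  have pin: "p \<in> parents A v" using h by (simp add: parents_def)
  { fix q assume "q \<in> parents A v" "q \<noteq> p"
    then have "is_reticulation A v" using ret_of_two h pin by (auto simp: parents_def) }
  then show ?thesis using pin h by blast
qed

lemma ret_other_parent: "is_reticulation A v \<Longrightarrow> \<exists>q. (q, v) \<in> A \<and> q \<noteq> p"
proof -
  assume "is_reticulation A v"
  then have "2 \<le> card (parents A v)" by (simp add: ret_iff)
  moreover have "card (parents A v) \<le> 1" if "parents A v \<subseteq> {p}"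
    using card_mono[OF _ that] by simp
  ultimately have "\<not> parents A v \<subseteq> {p}" by linarith
  then show ?thesis by (auto simp: parents_def)
qed

lemma rho_noparent: "(a, \<rho>) \<notin> A"
proof
  assume "(a, \<rho>) \<in> A"
  then have "a \<in> parents A \<rho>" by (simp add: parents_def)
  then have "parents A \<rho> \<noteq> {}" by blast
  then have "card (parents A \<rho>) \<noteq> 0" using fin_parents by simp
  then show False using indeg_rho by (simp add: indeg_def)
qed

lemma reach_rho: "(a, \<rho>) \<in> A\<^sup>* \<Longrightarrow> a = \<rho>"
  by (erule rtranclE) (auto simp: rho_noparent)

lemma reach_V: "(a, b) \<in> A\<^sup>* \<Longrightarrow> a \<in> V \<Longrightarrow> b \<in> V"
  by (induction rule: rtrancl_induct) (use AV in auto)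

lemma antisym: "(a, b) \<in> A\<^sup>* \<Longrightarrow> (b, a) \<in> A\<^sup>* \<Longrightarrow> a = b"
proof (rule ccontr)
  assume h: "(a, b) \<in> A\<^sup>*" "(b, a) \<in> A\<^sup>*" "a \<noteq> b"
  then have "(a, b) \<in> A\<^sup>+" "(b, a) \<in> A\<^sup>+" by (auto simp: rtrancl_eq_or_trancl)
  then have "(a, a) \<in> A\<^sup>+" by simp
  then show False using acyc by (simp add: acyclic_def)
qed

lemma path_ex: "(a, b) \<in> A\<^sup>* \<Longrightarrow> a \<in> V \<Longrightarrow> \<exists>q. dpath V A q \<and> hd q = a \<and> last q = b"
  by (rule reach_dpath[OF _ _ AV])

lemma rp_def2: "p \<in> rp y \<longleftrightarrow> dpath V A p \<and> hd p = \<rho> \<and> last p = y"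
  by (simp add: root_paths_def)

lemma rp_ex: "y \<in> V \<Longrightarrow> \<exists>p. p \<in> rp y"
  using path_ex[OF reach_all rhoV] by (auto simp: rp_def2)

lemma rp_rho: "p \<in> rp y \<Longrightarrow> \<rho> \<in> set p"
  by (auto simp: rp_def2 dpath_def)

lemma rp_last: "p \<in> rp y \<Longrightarrow> y \<in> set p"
  by (auto simp: rp_def2 dpath_def)

lemma rp_V: "p \<in> rp y \<Longrightarrow> y \<in> V"
  by (auto simp: rp_def2 dpath_def)

lemma rp_concat:
  assumes "p \<in> rp v" "dpath V A q" "hd q = v" "last q = y"
  shows "\<exists>p'. p' \<in> rp y \<and> set p' = set p \<union> set q"
  using dpath_append[of V A p q] assms by (intro exI[of _ "p @ tl q"]) (auto simp: rp_def2)

lemma rp_concat_reach: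
  assumes "p \<in> rp v" "(v, y) \<in> A\<^sup>*"
  shows "\<exists>q p'. dpath V A q \<and> hd q = v \<and> last q = y \<and> p' \<in> rp y \<and> set p' = set p \<union> set q"
proof -
  have "v \<in> V" using rp_V assms by blast
  then obtain q where q: "dpath V A q" "hd q = v" "last q = y" using path_ex assms by blast
  then show ?thesis using rp_concat[OF assms(1) q] by blast
qed

lemma rp_prefix:
  assumes "p \<in> rp y" "v \<in> set p"
  shows "\<exists>p'. p' \<in> rp v \<and> set p' \<subseteq> set p"
proof -
  obtain i where i: "i < length p" "p ! i = v" using assms(2) by (metis in_set_conv_nth)
  have d: "dpath V A p" "hd p = \<rho>" using assms by (auto simp: rp_def2)
  show ?thesis using dpath_take[OF d(1) i(1)] d i by (intro exI[of _ "take (Suc i) p"]) (auto simp: rp_def2)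
qed

lemma rp_suffix:
  assumes "p \<in> rp y" "v \<in> set p"
  shows "\<exists>q. dpath V A q \<and> hd q = v \<and> last q = y \<and> set q \<subseteq> set p"
proof -
  obtain i where i: "i < length p" "p ! i = v" using assms(2) by (metis in_set_conv_nth)
  have d: "dpath V A p" "last p = y" using assms by (auto simp: rp_def2)
  show ?thesis using dpath_drop[OF d(1) i(1)] d i by (intro exI[of _ "drop i p"]) auto
qed

lemma rp_mem_reach: "p \<in> rp y \<Longrightarrow> v \<in> set p \<Longrightarrow> (\<rho>, v) \<in> A\<^sup>* \<and> (v, y) \<in> A\<^sup>*"
  using dpath_mem_reach by (fastforce simp: rp_def2)

lemma descendant_iff:
  assumes "y \<in> V"
  shows "descendant V A \<rho> y u \<longleftrightarrow> u \<in> V \<and> (u, y) \<in> A\<^sup>*"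
proof
  assume "descendant V A \<rho> y u"
  then obtain p where p: "p \<in> rp y" "u \<in> set p" by (auto simp: descendant_def)
  then show "u \<in> V \<and> (u, y) \<in> A\<^sup>*" using rp_mem_reach[OF p] by (auto simp: rp_def2 dpath_def)
next
  assume h: "u \<in> V \<and> (u, y) \<in> A\<^sup>*"
  obtain p where p: "p \<in> rp u" using rp_ex h by blast
  obtain q p' where "dpath V A q" "hd q = u" "last q = y" "p' \<in> rp y" "set p' = set p \<union> set q"
    using rp_concat_reach[OF p] h by blast
  then show "descendant V A \<rho> y u" using rp_last[OF p] by (auto simp: descendant_def)
qed

lemma dom_reach: "dm u y \<Longrightarrow> y \<in> V \<Longrightarrow> u \<in> V \<and> (u, y) \<in> A\<^sup>*"
proof -
  assume h: "dm u y" "y \<in> V"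
  obtain p where p: "p \<in> rp y" using rp_ex h by blast
  then have "u \<in> set p" using h by (simp add: domi_def)
  then show ?thesis using rp_mem_reach[OF p] p by (auto simp: rp_def2 dpath_def)
qed

lemma S_iff: "x \<in> S u \<longleftrightarrow> x \<in> X \<and> dm u (\<phi> x)"
proof -
  { assume "x \<in> X" "dm u (\<phi> x)"
    then have "descendant V A \<rho> (\<phi> x) u" using dom_reach descendant_iff phiV by blast }
  then show ?thesis
    by (auto simp: Sset_def strict_descendant_def domi_def descendant_def)
qed

lemma H_iff: "x \<in> H u \<longleftrightarrow> x \<in> X \<and> u \<in> V \<and> (u, \<phi> x) \<in> A\<^sup>* \<and> \<not> dm u (\<phi> x)"
proof -
  { fix x assume "x \<in> X"
    then have "descendant V A \<rho> (\<phi> x) u \<longleftrightarrow> u \<in> V \<and> (u, \<phi> x) \<in> A\<^sup>*" using descendant_iff phiV by blast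
    moreover have "strict_descendant V A \<rho> (\<phi> x) u \<longleftrightarrow> descendant V A \<rho> (\<phi> x) u \<and> dm u (\<phi> x)"
      by (simp add: strict_descendant_def domi_def)
    ultimately have "nonstrict_descendant V A \<rho> (\<phi> x) u \<longleftrightarrow> u \<in> V \<and> (u, \<phi> x) \<in> A\<^sup>* \<and> \<not> dm u (\<phi> x)"
      by (auto simp: nonstrict_descendant_def) }
  then show ?thesis by (auto simp: Hset_def)
qed

lemma SH_Lab: "u \<in> V \<Longrightarrow> S u \<union> H u = Lab u"
  using dom_reach phiV by (auto simp: S_iff H_iff Lab_def)

lemma SH_disj: "S u \<inter> H u = {}" by (auto simp: S_iff H_iff)

lemma dom_trans:
  assumes "dm w u" "dm u y" "u \<in> V"
  shows "dm w y"
  unfolding domi_def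
proof
  fix p assume p: "p \<in> rp y"
  then have "u \<in> set p" using assms(2) by (simp add: domi_def)
  then obtain p' where "p' \<in> rp u" "set p' \<subseteq> set p" using rp_prefix p by blast
  then show "w \<in> set p" using assms(1) by (auto simp: domi_def)
qed

lemma nondom_path: "\<not> dm u y \<Longrightarrow> \<exists>P. P \<in> rp y \<and> u \<notin> set P"
  by (auto simp: domi_def)

end



context RC begin

abbreviation "carcs Q1 Q2 \<equiv> path_arcs Q1 \<union> path_arcs Q2"

lemma inst_cycle:
  assumes uV: "u \<in> V" and P0: "P0 \<in> rp u" and dQ: "dpath V A Q" "hd Q = u" "last Q = y"
    and P: "P \<in> rp y" "u \<notin> set P"
  shows "2 \<le> length P0 \<and> 2 \<le> length Q \<and>
    (\<exists>Q1 Q2. cyc_data V A Q1 Q2 \<and> (P0 ! (length P0 - 2), u) \<in> carcs Q1 Q2 \<and>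
       (u, Q ! 1) \<in> carcs Q1 Q2 \<and> u \<noteq> hd Q1 \<and> u \<noteq> last Q1 \<and> last Q1 \<in> set Q \<and> last Q1 \<in> set P)"
proof -
  have dP0: "dpath V A P0" "hd P0 = \<rho>" "last P0 = u" using P0 by (auto simp: rp_def2)
  have dP: "dpath V A P" "hd P = \<rho>" "last P = y" using P by (auto simp: rp_def2)
  have ne0: "P0 \<noteq> []" using dP0 by (simp add: dpath_def)
  have neQ: "Q \<noteq> []" using dQ by (simp add: dpath_def)
  have urho: "u \<noteq> \<rho>" using rp_rho[OF P(1)] P(2) by blast
  have uy: "u \<noteq> y" using rp_last[OF P(1)] P(2) by blast
  have l0: "2 \<le> length P0"
  proof (rule ccontr)
    assume "\<not> 2 \<le> length P0"
    then have "length P0 = 1" using ne0 by (cases P0) (auto simp: Suc_le_eq)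
    then have "hd P0 = last P0" using ne0 by (cases P0) auto
    then show False using dP0 urho by simp
  qed
  have lQ: "2 \<le> length Q"
  proof (rule ccontr)
    assume "\<not> 2 \<le> length Q"
    then have "length Q = 1" using neQ by (cases Q) (auto simp: Suc_le_eq)
    then have "hd Q = last Q" using neQ by (cases Q) auto
    then show False using dQ uy by simp
  qed
  define P1 where "P1 = P0 @ tl Q"
  have ap: "dpath V A P1 \<and> hd P1 = hd P0 \<and> last P1 = last Q \<and> set P1 = set P0 \<union> set Q"
    unfolding P1_def by (rule dpath_append) (use dP0 dQ in auto)
  define k where "k = length P0 - 1"
  have lenP1: "length P1 = length P0 + length Q - 1" using lQ by (simp add: P1_def)
  have kl: "k < length P1" using l0 lQ lenP1 k_def by simp
  have Pk: "P1 ! k = u" using ne0 dP0 by (simp add: P1_def k_def nth_append last_conv_nth)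
  have "k - 1 = length P0 - 2" "length P0 - 2 < length P0" using l0 by (auto simp: k_def)
  then have Pkm: "P1 ! (k - 1) = P0 ! (length P0 - 2)" by (simp add: P1_def nth_append)
  have Pk1: "P1 ! Suc k = Q ! 1"
  proof -
    have "Suc k = length P0" using l0 k_def by simp
    then have "P1 ! Suc k = tl Q ! 0" by (simp add: P1_def nth_append)
    also have "\<dots> = Q ! 1" using lQ by (simp add: nth_tl)
    finally show ?thesis .
  qed
  have "P1 ! k \<notin> set P" using Pk P by simp
  then obtain a b a' b' where c: "a < k" "k < b" "b < length P1" "a' < b'" "b' < length P"
    "P1 ! a = P ! a'" "P1 ! b = P ! b'" "cyc_data V A (seg P1 a b) (seg P a' b')"
    using CYC[OF acyc _ dP(1) _ _ kl] ap dP dP0 dQ by auto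
  let ?Q1 = "seg P1 a b" and ?Q2 = "seg P a' b'"
  have dis: "distinct P1" using dpath_distinct acyc ap by blast
  have e1: "(P1 ! (k - 1), P1 ! Suc (k - 1)) \<in> path_arcs ?Q1" using c by (intro seg_arc) auto
  have "Suc (k - 1) = k" using c by simp
  then have e1': "(P0 ! (length P0 - 2), u) \<in> carcs ?Q1 ?Q2" using e1 Pkm Pk by simp
  have e2: "(P1 ! k, P1 ! Suc k) \<in> path_arcs ?Q1" using c by (intro seg_arc) auto
  then have e2': "(u, Q ! 1) \<in> carcs ?Q1 ?Q2" using Pk Pk1 by simp
  have hq: "hd ?Q1 = P1 ! a" "last ?Q1 = P1 ! b" using c by (auto simp: seg_hd seg_last)
  have "P1 ! a \<noteq> P1 ! k" using c kl by (subst nth_eq_iff_index_eq[OF dis]) auto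
  then have u1: "u \<noteq> hd ?Q1" using hq Pk by simp
  have "P1 ! b \<noteq> P1 ! k" using c kl by (subst nth_eq_iff_index_eq[OF dis]) auto
  then have u2: "u \<noteq> last ?Q1" using hq Pk by simp
  have "P1 ! b \<in> set (tl Q)"
  proof -
    have "length P0 \<le> b" using c k_def by simp
    then have "P1 ! b = tl Q ! (b - length P0)" by (simp add: P1_def nth_append)
    moreover have "b - length P0 < length (tl Q)" using c(2,3) lenP1 l0 k_def by simp
    ultimately show ?thesis by simp
  qed
  moreover have "set (tl Q) \<subseteq> set Q" by (cases Q) auto
  ultimately have u3: "last ?Q1 \<in> set Q" using hq by auto
  have u4: "last ?Q1 \<in> set P" using hq c by simp
  show ?thesis using l0 lQ c(8) e1' e2' u1 u2 u3 u4 by blast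
qed

definition Kprop :: "'v \<Rightarrow> 'v \<Rightarrow> bool" where
  "Kprop u z \<longleftrightarrow> (\<forall>y Q P. dpath V A Q \<and> hd Q = u \<and> last Q = y \<and> P \<in> rp y \<and> u \<notin> set P \<longrightarrow>
      z \<in> set Q \<and> z \<in> set P \<and> is_reticulation A z)"

lemma K_exists:
  assumes uV: "u \<in> V"
  shows "\<exists>z. Kprop u z"
proof (cases "\<exists>y Q P. dpath V A Q \<and> hd Q = u \<and> last Q = y \<and> P \<in> rp y \<and> u \<notin> set P")
  case False then show ?thesis by (auto simp: Kprop_def)
next
  case True
  obtain P0 where P0: "P0 \<in> rp u" using rp_ex uV by blast
  obtain y0 Q0 Pa where i0: "dpath V A Q0" "hd Q0 = u" "last Q0 = y0" "Pa \<in> rp y0" "u \<notin> set Pa"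
    using True by blast
  obtain R1 R2 where R: "cyc_data V A R1 R2" "(P0 ! (length P0 - 2), u) \<in> carcs R1 R2"
    "last R1 \<in> set Q0" "last R1 \<in> set Pa"
    using inst_cycle[OF uV P0 i0] by blast
  have "Kprop u (last R1)" unfolding Kprop_def
  proof (intro allI impI)
    fix y Q P assume i: "dpath V A Q \<and> hd Q = u \<and> last Q = y \<and> P \<in> rp y \<and> u \<notin> set P"
    then obtain Q1 Q2 where C: "cyc_data V A Q1 Q2" "(P0 ! (length P0 - 2), u) \<in> carcs Q1 Q2"
      "last Q1 \<in> set Q" "last Q1 \<in> set P"
      using inst_cycle[OF uV P0] by blast
    have eq: "carcs Q1 Q2 = carcs R1 R2"
      using ret_eq[OF cyc_data_ret[OF C(1)] cyc_data_ret[OF R(1)] C(2) R(2)] .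
    obtain x1 x2 where x: "x1 \<noteq> x2" "(x1, last Q1) \<in> path_arcs Q1" "(x2, last Q1) \<in> path_arcs Q2"
      using I0[OF acyc C(1)] by blast
    have "last Q1 = last R1"
      using I1[OF acyc R(1), of x1 "last Q1" x2] x eq by blast
    moreover have "is_reticulation A (last Q1)"
    proof (rule ret_of_two[of x1 _ x2])
      show "(x1, last Q1) \<in> A" using x(2) path_arcs_sub C(1) unfolding cyc_data_def by blast
      show "(x2, last Q1) \<in> A" using x(3) path_arcs_sub C(1) unfolding cyc_data_def by blast
      show "x1 \<noteq> x2" by fact
    qed
    ultimately show "last R1 \<in> set Q \<and> last R1 \<in> set P \<and> is_reticulation A (last R1)" using C by simp
  qed
  then show ?thesis by blast
qed

lemma two_children_aux:
  assumes e: "(y, a) \<in> A" "(y, b) \<in> A" and qa: "dpath V A qa" "hd qa = a" "last qa = t"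
    and qb: "dpath V A qb" "hd qb = b" "last qb = t" and na: "a \<notin> set (y # qb)"
  shows "\<exists>Q1 Q2. cyc_data V A Q1 Q2 \<and> hd Q1 = y \<and> (y, a) \<in> carcs Q1 Q2 \<and> (y, b) \<in> carcs Q1 Q2 \<and>
     (last Q1, t) \<in> A\<^sup>*"
proof -
  have yV: "y \<in> V" using e AV by blast
  have neA: "qa \<noteq> []" and neB: "qb \<noteq> []" using qa qb by (auto simp: dpath_def)
  have d1: "dpath V A (y # qa)" using yV e qa by (simp add: dpath_Cons)
  have d2: "dpath V A (y # qb)" using yV e qb by (simp add: dpath_Cons)
  have l1: "last (y # qa) = last (y # qb)" using qa qb neA neB by simp
  have k: "1 < length (y # qa)" using neA by simp
  have k2: "(y # qa) ! 1 \<notin> set (y # qb)" using na qa neA by (simp add: hd_conv_nth)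
  obtain i j i' j' where c: "i < 1" "1 < j" "j < length (y # qa)" "i' < j'" "j' < length (y # qb)"
    "(y # qa) ! i = (y # qb) ! i'" "(y # qa) ! j = (y # qb) ! j'"
    "cyc_data V A (seg (y # qa) i j) (seg (y # qb) i' j')"
    using CYC[OF acyc d1 d2 _ l1 k k2] by auto
  have i0: "i = 0" using c by simp
  have dis2: "distinct (y # qb)" using dpath_distinct[OF acyc d2] .
  have "(y # qb) ! i' = (y # qb) ! 0" using c i0 by simp
  then have i'0: "i' = 0" using c by (subst (asm) nth_eq_iff_index_eq[OF dis2]) auto
  have h: "hd (seg (y # qa) i j) = y" using c i0 by (simp add: seg_hd)
  have a1: "((y # qa) ! 0, (y # qa) ! Suc 0) \<in> path_arcs (seg (y # qa) i j)" using c i0 by (intro seg_arc) auto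
  have a2: "((y # qb) ! 0, (y # qb) ! Suc 0) \<in> path_arcs (seg (y # qb) i' j')" using c i'0 by (intro seg_arc) auto
  have "(y # qa) ! Suc 0 = a" using qa neA by (simp add: hd_conv_nth)
  moreover have "(y # qb) ! Suc 0 = b" using qb neB by (simp add: hd_conv_nth)
  ultimately have arcs: "(y, a) \<in> path_arcs (seg (y # qa) i j)" "(y, b) \<in> path_arcs (seg (y # qb) i' j')"
    using a1 a2 by auto
  have "last (seg (y # qa) i j) = (y # qa) ! j" using c by (simp add: seg_last)
  moreover have "((y # qa) ! j, last (y # qa)) \<in> A\<^sup>*"
    using dpath_mem_reach(2)[OF d1] c(3) by (meson nth_mem)
  ultimately have "(last (seg (y # qa) i j), t) \<in> A\<^sup>*" using qa neA by simp
  then show ?thesis using c(8) h arcs by blast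
qed

lemma two_children_cycle:
  assumes e: "(y, a) \<in> A" "(y, b) \<in> A" "a \<noteq> b" and r: "(a, t) \<in> A\<^sup>*" "(b, t) \<in> A\<^sup>*"
  shows "\<exists>Q1 Q2. cyc_data V A Q1 Q2 \<and> hd Q1 = y \<and> (y, a) \<in> carcs Q1 Q2 \<and> (y, b) \<in> carcs Q1 Q2 \<and>
     (last Q1, t) \<in> A\<^sup>*"
proof -
  have aV: "a \<in> V" and bV: "b \<in> V" using e AV by auto
  obtain qa where qa: "dpath V A qa" "hd qa = a" "last qa = t" using path_ex[OF r(1) aV] by blast
  obtain qb where qb: "dpath V A qb" "hd qb = b" "last qb = t" using path_ex[OF r(2) bV] by blast
  show ?thesis
  proof (cases "a \<in> set (y # qb)")
    case False then show ?thesis using two_children_aux[OF e(1,2) qa qb] by blast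
  next
    case True
    have ay: "a \<noteq> y" using e(1) acyc by (auto simp: acyclic_def)
    then have "a \<in> set qb" using True by simp
    then have ba: "(b, a) \<in> A\<^sup>*" using dpath_mem_reach(1)[OF qb(1)] qb by metis
    have nb: "b \<notin> set (y # qa)"
    proof
      assume "b \<in> set (y # qa)"
      moreover have "b \<noteq> y" using e(2) acyc by (auto simp: acyclic_def)
      ultimately have "b \<in> set qa" by simp
      then have "(a, b) \<in> A\<^sup>*" using dpath_mem_reach(1)[OF qa(1)] qa by metis
      then show False using antisym ba e(3) by blast
    qed
    obtain Q1 Q2 where C: "cyc_data V A Q1 Q2" "hd Q1 = y" "(y, b) \<in> carcs Q1 Q2" "(y, a) \<in> carcs Q1 Q2"
      "(last Q1, t) \<in> A\<^sup>*"
      using two_children_aux[OF e(2,1) qb qa nb] by blast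
    then show ?thesis by blast
  qed
qed

lemma two_parents_aux:
  assumes e: "(a, y) \<in> A" "(b, y) \<in> A" and pa: "pa \<in> rp a" and pb: "pb \<in> rp b"
    and na: "a \<notin> set (pb @ [y])"
  shows "\<exists>Q1 Q2. cyc_data V A Q1 Q2 \<and> (a, y) \<in> carcs Q1 Q2 \<and> (b, y) \<in> carcs Q1 Q2"
proof -
  have yV: "y \<in> V" using e AV by blast
  have dpa: "dpath V A pa" "hd pa = \<rho>" "last pa = a" using pa by (auto simp: rp_def2)
  have dpb: "dpath V A pb" "hd pb = \<rho>" "last pb = b" using pb by (auto simp: rp_def2)
  have neA: "pa \<noteq> []" and neB: "pb \<noteq> []" using dpa dpb by (auto simp: dpath_def)
  have ea: "dpath V A [a, y]" using e AV by (auto simp: dpath_def less_Suc_eq)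
  have eb: "dpath V A [b, y]" using e AV by (auto simp: dpath_def less_Suc_eq)
  have apA: "dpath V A (pa @ tl [a, y]) \<and> hd (pa @ tl [a, y]) = hd pa \<and> last (pa @ tl [a, y]) = y"
    using dpath_append[OF dpa(1) ea] dpa by simp
  have apB: "dpath V A (pb @ tl [b, y]) \<and> hd (pb @ tl [b, y]) = hd pb \<and> last (pb @ tl [b, y]) = y"
    using dpath_append[OF dpb(1) eb] dpb by simp
  define P1 where "P1 = pa @ [y]"
  define P2 where "P2 = pb @ [y]"
  have d1: "dpath V A P1" "hd P1 = \<rho>" "last P1 = y" using apA dpa by (auto simp: P1_def)
  have d2: "dpath V A P2" "hd P2 = \<rho>" "last P2 = y" using apB dpb by (auto simp: P2_def)
  define k where "k = length pa - 1"
  have kl: "k < length P1" by (simp add: P1_def k_def)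
  have Pk: "P1 ! k = a" using neA dpa by (simp add: P1_def k_def nth_append last_conv_nth)
  have nk: "P1 ! k \<notin> set P2" using Pk na by (simp add: P2_def)
  obtain i j i' j' where c: "i < k" "k < j" "j < length P1" "i' < j'" "j' < length P2"
    "P1 ! i = P2 ! i'" "P1 ! j = P2 ! j'" "cyc_data V A (seg P1 i j) (seg P2 i' j')"
    using CYC[OF acyc d1(1) d2(1) _ _ kl nk] d1 d2 by auto
  have jj: "j = k + 1" using c by (simp add: P1_def k_def)
  have Pj: "P1 ! j = y" using jj neA by (simp add: P1_def k_def nth_append)
  have dis2: "distinct P2" using dpath_distinct[OF acyc d2(1)] .
  have "P2 ! j' = P2 ! (length P2 - 1)" using c Pj d2 by (metis last_conv_nth dpath_ne[OF d2(1)])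
  then have j'l: "j' = length P2 - 1" using c by (subst (asm) nth_eq_iff_index_eq[OF dis2]) auto
  have a1: "(P1 ! k, P1 ! Suc k) \<in> path_arcs (seg P1 i j)" using c jj by (intro seg_arc) auto
  have "P1 ! Suc k = y" using Pj jj by simp
  then have a1': "(a, y) \<in> path_arcs (seg P1 i j)" using a1 Pk by simp
  have lp2: "length P2 = length pb + 1" by (simp add: P2_def)
  have a2: "(P2 ! (j' - 1), P2 ! Suc (j' - 1)) \<in> path_arcs (seg P2 i' j')" using c by (intro seg_arc) auto
  have "Suc (j' - 1) = j'" using c by simp
  moreover have "P2 ! (j' - 1) = b" using j'l lp2 neB dpb by (simp add: P2_def nth_append last_conv_nth)
  moreover have "P2 ! j' = y" using j'l lp2 by (simp add: P2_def nth_append)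
  ultimately have a2': "(b, y) \<in> path_arcs (seg P2 i' j')" using a2 by simp
  show ?thesis using c(8) a1' a2' by blast
qed

lemma two_parents_cycle:
  assumes e: "(a, y) \<in> A" "(b, y) \<in> A" "a \<noteq> b"
  shows "\<exists>Q1 Q2. cyc_data V A Q1 Q2 \<and> (a, y) \<in> carcs Q1 Q2 \<and> (b, y) \<in> carcs Q1 Q2"
proof -
  have aV: "a \<in> V" and bV: "b \<in> V" using e AV by auto
  obtain pa where pa: "pa \<in> rp a" using rp_ex aV by blast
  obtain pb where pb: "pb \<in> rp b" using rp_ex bV by blast
  have ay: "a \<noteq> y" using e(1) acyc by (auto simp: acyclic_def)
  have by': "b \<noteq> y" using e(2) acyc by (auto simp: acyclic_def)
  show ?thesis
  proof (cases "a \<in> set (pb @ [y])")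
    case False then show ?thesis using two_parents_aux[OF e(1,2) pa pb] by blast
  next
    case True
    then have "a \<in> set pb" using ay by simp
    then have ab: "(a, b) \<in> A\<^sup>*" using rp_mem_reach[OF pb] by blast
    have "b \<notin> set (pa @ [y])"
    proof
      assume "b \<in> set (pa @ [y])"
      then have "b \<in> set pa" using by' by simp
      then have "(b, a) \<in> A\<^sup>*" using rp_mem_reach[OF pa] by blast
      then show False using antisym ab e(3) by blast
    qed
    then show ?thesis using two_parents_aux[OF e(2,1) pb pa] by blast
  qed
qed

end



context RC begin

lemma lab_ex: "v \<in> V \<Longrightarrow> \<exists>x\<in>X. (v, \<phi> x) \<in> A\<^sup>*"
proof -
  have wf: "wf (A\<inverse>)" by (rule finite_acyclic_wf_converse[OF finA acyc])
  show "v \<in> V \<Longrightarrow> \<exists>x\<in>X. (v, \<phi> x) \<in> A\<^sup>*"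
  proof (induction v rule: wf_induct[OF wf])
    fix v
    assume IH: "\<forall>y. (y, v) \<in> A\<inverse> \<longrightarrow> y \<in> V \<longrightarrow> (\<exists>x\<in>X. (y, \<phi> x) \<in> A\<^sup>*)"
    assume vV: "v \<in> V"
    show "\<exists>x\<in>X. (v, \<phi> x) \<in> A\<^sup>*"
    proof (cases "children A v = {}")
      case True
      then have "is_leaf A v" by (simp add: is_leaf_def outdeg_def)
      then have "v \<in> \<phi> ` X" using leafcond vV by blast
      then obtain x where x: "x \<in> X" "v = \<phi> x" by blast
      have "(v, \<phi> x) \<in> A\<^sup>*" using x(2) by simp
      then show ?thesis using x(1) by (intro bexI[of _ x])
    next
      case False
      then obtain c where c: "(v, c) \<in> A" by (auto simp: children_def)
      then have "c \<in> V" using AV by blast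
      moreover have "(c, v) \<in> A\<inverse>" using c by simp
      ultimately obtain x where x: "x \<in> X" "(c, \<phi> x) \<in> A\<^sup>*" using IH by blast
      have "(v, \<phi> x) \<in> A\<^sup>*" by (rule converse_rtrancl_into_rtrancl[OF c x(2)])
      then show ?thesis using x(1) by (intro bexI[of _ x])
    qed
  qed
qed

lemma second_child:
  assumes "v \<in> V" "v \<notin> \<phi> ` X" "\<not> is_reticulation A v" "(v, s) \<in> A"
  shows "\<exists>d. (v, d) \<in> A \<and> d \<noteq> s"
proof -
  have t: "is_tree_vertex A v" using assms(3) by (simp add: is_tree_vertex_def is_reticulation_def)
  have "\<not> is_leaf A v" "outdeg A v \<noteq> 1" using leafcond[OF assms(1)] assms(2) t by auto
  moreover have "s \<in> children A v" using assms(4) by (simp add: children_def)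
  moreover have "children A v \<noteq> {s}"
  proof
    assume "children A v = {s}"
    then have "outdeg A v = 1" by (simp add: outdeg_def)
    then show False using \<open>outdeg A v \<noteq> 1\<close> by simp
  qed
  ultimately obtain d where "d \<in> children A v" "d \<noteq> s" by blast
  then show ?thesis by (auto simp: children_def)
qed

lemma extend_avoid:
  assumes "P \<in> rp z" "u \<notin> set P" "(z, y) \<in> A\<^sup>*" "(z, u) \<notin> A\<^sup>*"
  shows "\<exists>P'. P' \<in> rp y \<and> u \<notin> set P'"
proof -
  obtain q P' where q: "dpath V A q" "hd q = z" "last q = y" "P' \<in> rp y" "set P' = set P \<union> set q"
    using rp_concat_reach[OF assms(1,3)] by blast
  have "u \<notin> set q"
  proof
    assume "u \<in> set q"
    then have "(z, u) \<in> A\<^sup>*" using dpath_mem_reach(1)[OF q(1)] q(2) by metis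
    then show False using assms(4) by blast
  qed
  then show ?thesis using q assms(2) by blast
qed

lemma Hchar:
  assumes uV: "u \<in> V" and K: "Kprop u z" and Hne: "H u \<noteq> {}"
  shows "H u = Lab z \<and> (u, z) \<in> A\<^sup>* \<and> (\<exists>P. P \<in> rp z \<and> u \<notin> set P) \<and> z \<noteq> u \<and> is_reticulation A z"
proof -
  have inst: "z \<in> set Q \<and> z \<in> set P \<and> is_reticulation A z"
    if "dpath V A Q" "hd Q = u" "last Q = y" "P \<in> rp y" "u \<notin> set P" for Q P y
    using K that unfolding Kprop_def by blast
  have hx: "\<exists>Q P. dpath V A Q \<and> hd Q = u \<and> last Q = \<phi> x \<and> P \<in> rp (\<phi> x) \<and> u \<notin> set P"
    if "x \<in> H u" for x
  proof -
    have x: "x \<in> X" "(u, \<phi> x) \<in> A\<^sup>*" "\<not> dm u (\<phi> x)" using that by (auto simp: H_iff)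
    obtain P where "P \<in> rp (\<phi> x)" "u \<notin> set P" using nondom_path[OF x(3)] by blast
    moreover obtain Q where "dpath V A Q" "hd Q = u" "last Q = \<phi> x" using path_ex[OF x(2) uV] by blast
    ultimately show ?thesis by blast
  qed
  obtain x0 where x0: "x0 \<in> H u" using Hne by blast
  obtain Q0 P0 where i0: "dpath V A Q0" "hd Q0 = u" "last Q0 = \<phi> x0" "P0 \<in> rp (\<phi> x0)" "u \<notin> set P0"
    using hx[OF x0] by blast
  have zz: "z \<in> set Q0" "z \<in> set P0" "is_reticulation A z" using inst[OF i0] by auto
  have uz: "(u, z) \<in> A\<^sup>*" using dpath_mem_reach(1)[OF i0(1) zz(1)] i0(2) by simp
  obtain Pz where Pz: "Pz \<in> rp z" "set Pz \<subseteq> set P0" using rp_prefix[OF i0(4) zz(2)] by blast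
  have Pzu: "u \<notin> set Pz" using Pz i0(5) by blast
  have zu: "z \<noteq> u" using zz(2) i0(5) by blast
  have zreach: "(z, u) \<notin> A\<^sup>*" using antisym uz zu by blast
  have "H u \<subseteq> Lab z"
  proof
    fix x assume x: "x \<in> H u"
    then obtain Q P where i: "dpath V A Q" "hd Q = u" "last Q = \<phi> x" "P \<in> rp (\<phi> x)" "u \<notin> set P"
      using hx by blast
    have "z \<in> set Q" using inst[OF i] by blast
    then have "(z, \<phi> x) \<in> A\<^sup>*" using dpath_mem_reach(2)[OF i(1)] i(3) by metis
    then show "x \<in> Lab z" using x by (auto simp: Lab_def H_iff)
  qed
  moreover have "Lab z \<subseteq> H u"
  proof
    fix x assume x: "x \<in> Lab z"
    then have xX: "x \<in> X" and zx: "(z, \<phi> x) \<in> A\<^sup>*" by (auto simp: Lab_def)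
    obtain P' where "P' \<in> rp (\<phi> x)" "u \<notin> set P'" using extend_avoid[OF Pz(1) Pzu zx zreach] by blast
    then have "\<not> dm u (\<phi> x)" by (auto simp: domi_def)
    moreover have "(u, \<phi> x) \<in> A\<^sup>*" using uz zx by simp
    ultimately show "x \<in> H u" using xX uV by (simp add: H_iff)
  qed
  ultimately show ?thesis using uz Pz Pzu zu zz(3) by blast
qed

lemma nondom_Lab_H:
  assumes uV: "u \<in> V" and wV: "w \<in> V" and wu: "(w, u) \<in> A\<^sup>*" and nd: "\<not> dm w u"
  shows "Lab u \<subseteq> H w"
proof
  fix x assume x: "x \<in> Lab u"
  then have xX: "x \<in> X" and ux: "(u, \<phi> x) \<in> A\<^sup>*" by (auto simp: Lab_def)
  obtain P where P: "P \<in> rp u" "w \<notin> set P" using nondom_path[OF nd] by blast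
  have uw: "u \<noteq> w" using P rp_last by blast
  then have "(u, w) \<notin> A\<^sup>*" using antisym wu by blast
  then obtain P' where "P' \<in> rp (\<phi> x)" "w \<notin> set P'" using extend_avoid[OF P ux] by blast
  then have "\<not> dm w (\<phi> x)" by (auto simp: domi_def)
  moreover have "(w, \<phi> x) \<in> A\<^sup>*" using wu ux by simp
  ultimately show "x \<in> H w" using xX wV by (simp add: H_iff)
qed

lemma Lab_mono: "(w, u) \<in> A\<^sup>* \<Longrightarrow> Lab u \<subseteq> Lab w"
  by (auto simp: Lab_def)

lemma case_iv:
  assumes uV: "u \<in> V" and wV: "w \<in> V" and dwu: "dm w u" and K: "Kprop w z" and Hw: "H w \<noteq> {}"
    and uz: "(u, z) \<in> A\<^sup>*"
  shows "H u = H w \<and> S u \<subseteq> S w"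
proof -
  have Hc: "H w = Lab z" "(w, z) \<in> A\<^sup>*" "z \<noteq> w" and Pz0: "\<exists>P. P \<in> rp z \<and> w \<notin> set P"
    using Hchar[OF wV K Hw] by auto
  obtain Pz where Pz: "Pz \<in> rp z" "w \<notin> set Pz" using Pz0 by blast
  have uPz: "u \<notin> set Pz"
  proof
    assume "u \<in> set Pz"
    then obtain p' where "p' \<in> rp u" "set p' \<subseteq> set Pz" using rp_prefix Pz by blast
    then show False using dwu Pz(2) by (auto simp: domi_def)
  qed
  have zV: "z \<in> V" using reach_V uz uV by blast
  have zu: "z \<noteq> u" using rp_last[OF Pz(1)] uPz by blast
  have zreach: "(z, u) \<notin> A\<^sup>*" using antisym uz zu by blast
  obtain xl where xl: "xl \<in> X" "(z, \<phi> xl) \<in> A\<^sup>*" using lab_ex zV by blast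
  obtain P' where "P' \<in> rp (\<phi> xl)" "u \<notin> set P'" using extend_avoid[OF Pz(1) uPz xl(2) zreach] by blast
  then have "xl \<in> H u" using xl uz uV by (auto simp: H_iff domi_def)
  then have Hu: "H u \<noteq> {}" by blast
  obtain zu where Ku: "Kprop u zu" using K_exists uV by blast
  obtain Qu where Qu: "dpath V A Qu" "hd Qu = u" "last Qu = z" using path_ex[OF uz uV] by blast
  have zuin: "zu \<in> set Qu" "zu \<in> set Pz" using Ku Qu Pz uPz unfolding Kprop_def by blast+
  have zuz: "(zu, z) \<in> A\<^sup>*" using dpath_mem_reach(2)[OF Qu(1) zuin(1)] Qu by simp
  have Hcu: "H u = Lab zu" "(u, zu) \<in> A\<^sup>*" using Hchar[OF uV Ku Hu] by auto
  obtain Pzu where Pzu: "Pzu \<in> rp zu" "set Pzu \<subseteq> set Pz" using rp_prefix[OF Pz(1) zuin(2)] by blast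
  have wzu: "(w, zu) \<in> A\<^sup>*" using dom_reach[OF dwu uV] Hcu(2) rtrancl_trans by metis
  obtain Qw where Qw: "dpath V A Qw" "hd Qw = w" "last Qw = zu" using path_ex[OF wzu wV] by blast
  have "z \<in> set Qw" using K Qw Pzu Pz(2) unfolding Kprop_def by blast
  then have "(z, zu) \<in> A\<^sup>*" using dpath_mem_reach(2)[OF Qw(1)] Qw by metis
  then have "zu = z" using antisym zuz by blast
  then have "H u = H w" using Hcu Hc by simp
  moreover have "S u \<subseteq> S w" using dom_trans[OF dwu _ uV] by (auto simp: S_iff)
  ultimately show ?thesis by blast
qed

lemma key_cases:
  assumes uV: "u \<in> V" and wV: "w \<in> V" and wu: "(w, u) \<in> A\<^sup>*"
  shows "Lab u \<subseteq> S w \<or> Lab u \<subseteq> H w \<or> (H u = H w \<and> H w \<noteq> {} \<and> S u \<subseteq> S w)"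
proof (cases "dm w u")
  case False then show ?thesis using nondom_Lab_H[OF uV wV wu] by blast
next
  case dwu: True
  show ?thesis
  proof (cases "H w = {}")
    case True
    then have "Lab u \<subseteq> S w" using Lab_mono[OF wu] SH_Lab[OF wV] by blast
    then show ?thesis by blast
  next
    case Hw: False
    obtain z where K: "Kprop w z" using K_exists wV by blast
    have Hc: "H w = Lab z" "(w, z) \<in> A\<^sup>*" using Hchar[OF wV K Hw] by auto
    show ?thesis
    proof (cases "(z, u) \<in> A\<^sup>*")
      case True then show ?thesis using Lab_mono[OF True] Hc by blast
    next
      case zu: False
      show ?thesis
      proof (cases "(u, z) \<in> A\<^sup>*")
        case True then show ?thesis using case_iv[OF uV wV dwu K Hw True] Hw by blast
      next
        case uz: False
        have "Lab u \<subseteq> S w"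
        proof
          fix x assume x: "x \<in> Lab u"
          then have xX: "x \<in> X" and ux: "(u, \<phi> x) \<in> A\<^sup>*" by (auto simp: Lab_def)
          have "x \<notin> H w"
          proof
            assume xH: "x \<in> H w"
            then have "\<not> dm w (\<phi> x)" by (simp add: H_iff)
            then obtain P where P: "P \<in> rp (\<phi> x)" "w \<notin> set P" using nondom_path by blast
            obtain q1 where q1: "dpath V A q1" "hd q1 = w" "last q1 = u" using path_ex[OF wu wV] by blast
            obtain q2 where q2: "dpath V A q2" "hd q2 = u" "last q2 = \<phi> x" using path_ex[OF ux uV] by blast
            have ap: "dpath V A (q1 @ tl q2) \<and> hd (q1 @ tl q2) = hd q1 \<and> last (q1 @ tl q2) = last q2 \<and>
                set (q1 @ tl q2) = set q1 \<union> set q2" using dpath_append[OF q1(1) q2(1)] q1 q2 by simp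
            have "z \<in> set (q1 @ tl q2)" using K ap q1 q2 P unfolding Kprop_def by metis
            then have "z \<in> set q1 \<or> z \<in> set q2" using ap by blast
            then show False
            proof
              assume "z \<in> set q1"
              then have "(z, u) \<in> A\<^sup>*" using dpath_mem_reach(2)[OF q1(1)] q1 by metis
              then show False using zu by blast
            next
              assume "z \<in> set q2"
              then have "(u, z) \<in> A\<^sup>*" using dpath_mem_reach(1)[OF q2(1)] q2 by metis
              then show False using uz by blast
            qed
          qed
          moreover have "x \<in> Lab w" using x Lab_mono[OF wu] by blast
          ultimately show "x \<in> S w" using SH_Lab[OF wV] by blast
        qed
        then show ?thesis by blast
      qed
    qed
  qed
qed

lemma pair_le:
  assumes uV: "u \<in> V" and wV: "w \<in> V" and wu: "(w, u) \<in> A\<^sup>*"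
  shows "sp_le (S u, H u) (S w, H w)"
    "H u \<noteq> {} \<Longrightarrow> sp_le (H u, {}) (S w, H w) \<or> (H w \<noteq> {} \<and> H u = H w)"
proof -
  have L: "S u \<union> H u = Lab u" using SH_Lab[OF uV] .
  note kc = key_cases[OF uV wV wu]
  show "sp_le (S u, H u) (S w, H w)"
  proof (cases "H u = H w \<and> H w \<noteq> {} \<and> S u \<subseteq> S w")
    case True
    then show ?thesis by (cases "S u = S w") (auto simp: sp_le_def)
  next
    case False
    then have "Lab u \<subseteq> S w \<or> Lab u \<subseteq> H w" using kc by blast
    then show ?thesis using L by (auto simp: sp_le_def)
  qed
  show "sp_le (H u, {}) (S w, H w) \<or> (H w \<noteq> {} \<and> H u = H w)" if "H u \<noteq> {}"
  proof (cases "H u = H w \<and> H w \<noteq> {} \<and> S u \<subseteq> S w")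
    case True then show ?thesis by blast
  next
    case False
    then have "Lab u \<subseteq> S w \<or> Lab u \<subseteq> H w" using kc by blast
    then show ?thesis using L by (auto simp: sp_le_def)
  qed
qed

end



context RC begin

lemma arc_of_Q1:
  assumes "dpath V A Q" "Suc t < length Q"
  shows "(Q ! t, Q ! Suc t) \<in> path_arcs Q"
  using assms by (auto simp: path_arcs_iff)

lemma LS:
  assumes uV: "u \<in> V" and nr: "\<not> is_reticulation A u"
  shows "S u \<noteq> {}"
proof
  assume S0: "S u = {}"
  obtain x where x: "x \<in> X" "(u, \<phi> x) \<in> A\<^sup>*" using lab_ex uV by blast
  have "x \<in> Lab u" using x by (simp add: Lab_def)
  then have "x \<in> H u" using SH_Lab[OF uV] S0 by blast
  then have Hne: "H u \<noteq> {}" by blast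
  obtain z where K: "Kprop u z" using K_exists uV by blast
  have Hc: "H u = Lab z" "(u, z) \<in> A\<^sup>*" "z \<noteq> u" and Pz0: "\<exists>P. P \<in> rp z \<and> u \<notin> set P"
    using Hchar[OF uV K Hne] by auto
  obtain Pz where Pz: "Pz \<in> rp z" "u \<notin> set Pz" using Pz0 by blast
  have LL: "Lab u = Lab z" using SH_Lab[OF uV] S0 Hc by simp
  have nl: "u \<notin> \<phi> ` X"
  proof
    assume "u \<in> \<phi> ` X"
    then obtain x' where x': "x' \<in> X" "u = \<phi> x'" by blast
    then have "x' \<in> Lab u" by (simp add: Lab_def)
    then have "x' \<in> Lab z" using LL by simp
    then have "(z, u) \<in> A\<^sup>*" using x' by (simp add: Lab_def)
    then show False using antisym Hc by blast
  qed
  obtain P0 where P0: "P0 \<in> rp u" using rp_ex uV by blast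
  obtain Q where Q: "dpath V A Q" "hd Q = u" "last Q = z" using path_ex[OF Hc(2) uV] by blast
  obtain R1 R2 where R: "cyc_data V A R1 R2" "(u, Q ! 1) \<in> carcs R1 R2" "u \<noteq> hd R1"
    and lQ: "2 \<le> length Q"
    using inst_cycle[OF uV P0 Q Pz] by blast
  define s where "s = Q ! 1"
  have Q0: "Q ! 0 = u" using Q by (metis hd_conv_nth dpath_ne)
  have us: "(u, s) \<in> A" using Q(1) lQ Q0 unfolding s_def dpath_def by (metis One_nat_def Suc_1 Suc_le_lessD)
  have sz: "(s, z) \<in> A\<^sup>*"
  proof -
    have "s \<in> set Q" using lQ unfolding s_def by simp
    then show ?thesis using dpath_mem_reach(2)[OF Q(1)] Q(3) by metis
  qed
  obtain d where d: "(u, d) \<in> A" "d \<noteq> s" using second_child[OF uV nl nr us] by blast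
  have dV: "d \<in> V" using d AV by blast
  obtain xl where xl: "xl \<in> X" "(d, \<phi> xl) \<in> A\<^sup>*" using lab_ex dV by blast
  have "(u, \<phi> xl) \<in> A\<^sup>*" using d(1) xl(2) converse_rtrancl_into_rtrancl by metis
  then have "xl \<in> Lab u" using xl by (simp add: Lab_def)
  then have "xl \<in> Lab z" using LL by simp
  then have "(z, \<phi> xl) \<in> A\<^sup>*" by (simp add: Lab_def)
  then have sxl: "(s, \<phi> xl) \<in> A\<^sup>*" using sz rtrancl_trans by metis
  obtain C1 C2 where C: "cyc_data V A C1 C2" "(u, s) \<in> carcs C1 C2" "(u, d) \<in> carcs C1 C2"
    using two_children_cycle[OF us d(1) d(2)[symmetric] sxl xl(2)] by blast
  have "carcs C1 C2 = carcs R1 R2"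
    using ret_eq[OF cyc_data_ret[OF C(1)] cyc_data_ret[OF R(1)] C(2)] R(2) s_def by simp
  then have "u = hd R1" using I2[OF acyc R(1), of u s d] C d(2) by simp
  then show False using R(3) by simp
qed

lemma G_aux:
  assumes cd: "cyc_data V A Q1 Q2" and l3: "3 \<le> length Q1" and lu: "(last Q1, u) \<in> A\<^sup>*"
    and labs: "\<forall>x\<in>X. (hd Q1, \<phi> x) \<in> A\<^sup>* \<longrightarrow> (u, \<phi> x) \<in> A\<^sup>*"
  shows False
proof -
  have dQ: "dpath V A Q1" using cd by (simp add: cyc_data_def)
  have dis: "distinct Q1" using dpath_distinct[OF acyc dQ] .
  have ne: "Q1 \<noteq> []" using dQ by (simp add: dpath_def)
  define w where "w = Q1 ! 0"
  define y where "y = Q1 ! 1"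
  define s where "s = Q1 ! 2"
  have hw: "hd Q1 = w" using ne by (simp add: w_def hd_conv_nth)
  have wy: "(w, y) \<in> path_arcs Q1" using arc_of_Q1[OF dQ, of 0] l3 by (simp add: w_def y_def)
  have ys: "(y, s) \<in> path_arcs Q1" using arc_of_Q1[OF dQ, of 1] l3 by (simp add: s_def y_def numeral_2_eq_2)
  have wyA: "(w, y) \<in> A" and ysA: "(y, s) \<in> A" using wy ys path_arcs_sub[OF dQ] by auto
  have "Q1 ! 1 \<noteq> Q1 ! 0" using l3 by (subst nth_eq_iff_index_eq[OF dis]) auto
  then have yhd: "y \<noteq> hd Q1" using hw unfolding y_def w_def by simp
  have ylast: "y \<noteq> last Q1"
  proof -
    have "last Q1 = Q1 ! (length Q1 - 1)" using ne by (simp add: last_conv_nth)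
    then show ?thesis using l3 unfolding y_def by (simp add: nth_eq_iff_index_eq[OF dis])
  qed
  have yin: "y \<in> set Q1" using l3 unfolding y_def by simp
  have ylst: "(y, last Q1) \<in> A\<^sup>*" using dpath_mem_reach(2)[OF dQ yin] .
  have sin: "s \<in> set Q1" using l3 unfolding s_def by simp
  have slst: "(s, last Q1) \<in> A\<^sup>*" using dpath_mem_reach(2)[OF dQ sin] .
  have yV: "y \<in> V" using ysA AV by blast
  have nr: "\<not> is_reticulation A y"
  proof
    assume "is_reticulation A y"
    then obtain q where q: "(q, y) \<in> A" "q \<noteq> w" using ret_other_parent by blast
    obtain C1 C2 where C: "cyc_data V A C1 C2" "(w, y) \<in> carcs C1 C2" "(q, y) \<in> carcs C1 C2"
      using two_parents_cycle[OF wyA q(1) q(2)[symmetric]] by blast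
    have "carcs C1 C2 = carcs Q1 Q2"
      using ret_eq[OF cyc_data_ret[OF C(1)] cyc_data_ret[OF cd] C(2)] wy by blast
    then have "y = last Q1" using I1[OF acyc cd, of w y q] C q(2) by simp
    then show False using ylast by simp
  qed
  have nl: "y \<notin> \<phi> ` X"
  proof
    assume "y \<in> \<phi> ` X"
    then obtain x where x: "x \<in> X" "y = \<phi> x" by blast
    have "(hd Q1, y) \<in> A\<^sup>*" using dpath_mem_reach(1)[OF dQ yin] .
    then have uy: "(u, y) \<in> A\<^sup>*" using labs x by blast
    have yu: "(y, u) \<in> A\<^sup>*" using ylst lu rtrancl_trans by metis
    have "y = u" using antisym uy yu by blast
    then have "(last Q1, y) \<in> A\<^sup>*" using lu by simp
    then have "y = last Q1" using antisym ylst by blast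
    then show False using ylast by simp
  qed
  obtain d where d: "(y, d) \<in> A" "d \<noteq> s" using second_child[OF yV nl nr ysA] by blast
  have dV: "d \<in> V" using d AV by blast
  obtain xl where xl: "xl \<in> X" "(d, \<phi> xl) \<in> A\<^sup>*" using lab_ex dV by blast
  have "(y, \<phi> xl) \<in> A\<^sup>*" using d(1) xl(2) converse_rtrancl_into_rtrancl by metis
  then have "(w, \<phi> xl) \<in> A\<^sup>*" using wyA converse_rtrancl_into_rtrancl by metis
  then have "(u, \<phi> xl) \<in> A\<^sup>*" using labs xl hw by blast
  then have sxl: "(s, \<phi> xl) \<in> A\<^sup>*" using slst lu rtrancl_trans by metis
  obtain C1 C2 where C: "cyc_data V A C1 C2" "(y, s) \<in> carcs C1 C2" "(y, d) \<in> carcs C1 C2"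
    using two_children_cycle[OF ysA d(1) d(2)[symmetric] sxl xl(2)] by blast
  have "carcs C1 C2 = carcs Q1 Q2"
    using ret_eq[OF cyc_data_ret[OF C(1)] cyc_data_ret[OF cd] C(2)] ys by blast
  then have "y = hd Q1" using I2[OF acyc cd, of y s d] C d(2) by simp
  then show False using yhd by simp
qed

lemma G:
  assumes cd: "cyc_data V A Q1 Q2" and lu: "(last Q1, u) \<in> A\<^sup>*"
    and labs: "\<forall>x\<in>X. (hd Q1, \<phi> x) \<in> A\<^sup>* \<longrightarrow> (u, \<phi> x) \<in> A\<^sup>*"
  shows False
proof -
  have eq: "hd Q1 = hd Q2" "last Q1 = last Q2" using cd by (auto simp: cyc_data_def)
  consider "3 \<le> length Q1" | "3 \<le> length Q2" using cyc_data_len(4)[OF acyc cd] by blast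
  then show False
  proof cases
    case 1 show False by (rule G_aux[OF cd 1 lu labs])
  next
    case 2 then show False using G_aux[OF cyc_data_sym[OF cd] 2] lu labs eq by simp
  qed
qed

end



context RC begin

abbreviation "\<sigma> \<equiv> size_ts V r"
abbreviation "Vl \<equiv> Vlevel V A r"
abbreviation "SP \<equiv> SPS X V A \<rho> \<phi> r"

lemma Vl_iff: "u \<in> Vl i \<longleftrightarrow> u \<in> V \<and> r u \<le> real i \<and> (\<forall>p. (p, u) \<in> A \<longrightarrow> r p > real i)"
  by (auto simp: Vlevel_def parents_def)

lemma Vl_nonret: "u \<in> Vl i \<Longrightarrow> \<not> is_reticulation A u"
proof
  assume u: "u \<in> Vl i" "is_reticulation A u"
  then obtain q where q: "(q, u) \<in> A" using ret_other_parent by blast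
  then have "r q = r u" using r_ret_arc u(2) by blast
  moreover have "r q > real i" "r u \<le> real i" using u(1) q by (auto simp: Vl_iff)
  ultimately show False by simp
qed

lemma Vl_V: "u \<in> Vl i \<Longrightarrow> u \<in> V" by (simp add: Vl_iff)

lemma rank_le_sigma: "v \<in> V \<Longrightarrow> r v \<le> real \<sigma>"
proof -
  assume "v \<in> V"
  then have "r v \<in> real ` {0..\<sigma>}" using rank_img by blast
  then show ?thesis by auto
qed

lemma reach_into_level:
  assumes "(u, w) \<in> A\<^sup>*" "u \<noteq> w" "w \<in> Vl j"
  shows "r u > real j"
proof -
  obtain p where p: "(u, p) \<in> A\<^sup>*" "(p, w) \<in> A" using assms(1,2) by (meson rtranclE)
  then have "r p > real j" using assms(3) by (simp add: Vl_iff)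
  moreover have "r p \<le> r u" using r_reach[OF p(1)] .
  ultimately show ?thesis by simp
qed

lemma first_level:
  assumes dQ: "dpath V A Q" and last: "r (last Q) \<le> real j"
    and hd: "r (hd Q) > real j \<or> hd Q \<in> Vl j"
  shows "\<exists>m < length Q. Q ! m \<in> Vl j"
proof (cases "hd Q \<in> Vl j")
  case True
  have "Q \<noteq> []" using dQ by (simp add: dpath_def)
  then show ?thesis using True by (intro exI[of _ 0]) (simp add: hd_conv_nth)
next
  case False
  then have h: "r (Q ! 0) > real j" using hd dQ by (simp add: hd_conv_nth dpath_def)
  have ne: "Q \<noteq> []" using dQ by (simp add: dpath_def)
  define m where "m = (LEAST m. m < length Q \<and> r (Q ! m) \<le> real j)"
  have ex: "length Q - 1 < length Q \<and> r (Q ! (length Q - 1)) \<le> real j"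
    using last ne by (simp add: last_conv_nth)
  have mP: "m < length Q \<and> r (Q ! m) \<le> real j" unfolding m_def by (rule LeastI[of "\<lambda>m. m < length Q \<and> r (Q ! m) \<le> real j", OF ex])
  have m0: "m \<noteq> 0"
  proof
    assume "m = 0" then show False using mP h by simp
  qed
  have prev: "\<not> (m - 1 < length Q \<and> r (Q ! (m - 1)) \<le> real j)"
    unfolding m_def by (rule not_less_Least) (use m0 m_def in simp)
  then have rp: "r (Q ! (m - 1)) > real j" using mP by auto
  have arc: "(Q ! (m - 1), Q ! m) \<in> A" using dQ mP m0 unfolding dpath_def
    by (metis Suc_pred' not_gr_zero)
  have nr: "\<not> is_reticulation A (Q ! m)"
  proof
    assume "is_reticulation A (Q ! m)"
    then have "r (Q ! (m - 1)) = r (Q ! m)" using r_ret_arc arc by blast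
    then show False using rp mP by simp
  qed
  have par: "parents A (Q ! m) = {Q ! (m - 1)}" using nonret_parent[OF nr arc] .
  have "Q ! m \<in> V" using dQ mP by (auto simp: dpath_def)
  then have "Q ! m \<in> Vl j" using par rp mP by (auto simp: Vlevel_def)
  then show ?thesis using mP by blast
qed

lemma up_level:
  assumes u: "u \<in> Vl i" and ij: "i \<le> j"
  shows "\<exists>w \<in> Vl j. (w, u) \<in> A\<^sup>*"
proof -
  have uV: "u \<in> V" using u by (simp add: Vl_iff)
  obtain P where P: "P \<in> rp u" using rp_ex uV by blast
  have dP: "dpath V A P" "hd P = \<rho>" "last P = u" using P by (auto simp: rp_def2)
  have lst: "r (last P) \<le> real j" using u dP ij by (auto simp: Vl_iff)
  have "r (hd P) > real j \<or> hd P \<in> Vl j"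
  proof (cases "r \<rho> > real j")
    case False
    then have "\<rho> \<in> Vl j" using rhoV rho_noparent by (auto simp: Vl_iff)
    then show ?thesis using dP by simp
  qed (use dP in simp)
  then obtain m where m: "m < length P" "P ! m \<in> Vl j" using first_level[OF dP(1) lst] by blast
  have "(P ! m, P ! (length P - 1)) \<in> A\<^sup>*" using dpath_reach[OF dP(1)] m by simp
  moreover have "P ! (length P - 1) = u" using dP by (metis last_conv_nth dpath_ne)
  ultimately show ?thesis using m by metis
qed

lemma exist_top:
  assumes j: "j \<le> \<sigma>"
  shows "\<exists>w \<in> Vl j. r w = real j"
proof -
  have "real j \<in> r ` V" using rank_img j by auto
  then obtain v where v: "v \<in> V" "r v = real j" by auto
  have wf: "wf A" by (rule finite_acyclic_wf[OF finA acyc])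
  obtain w where w: "w \<in> {v \<in> V. r v = real j}" "\<forall>y. (y, w) \<in> A \<longrightarrow> y \<notin> {v \<in> V. r v = real j}"
    using wf v unfolding wf_eq_minimal by (metis (mono_tags, lifting) mem_Collect_eq)
  have "\<forall>p. (p, w) \<in> A \<longrightarrow> r p > real j"
  proof (intro allI impI)
    fix p assume p: "(p, w) \<in> A"
    then have "p \<in> V" using AV by blast
    then have "r p \<noteq> real j" using w(2) p by blast
    moreover have "r w \<le> r p" using r_arc[OF p] .
    ultimately show "r p > real j" using w(1) by simp
  qed
  then show ?thesis using w(1) by (auto simp: Vl_iff)
qed

lemma top_level: "Vl \<sigma> = {\<rho>}"
proof
  show "{\<rho>} \<subseteq> Vl \<sigma>" using rhoV rho_noparent rank_le_sigma by (auto simp: Vl_iff)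
  show "Vl \<sigma> \<subseteq> {\<rho>}"
  proof
    fix v assume v: "v \<in> Vl \<sigma>"
    show "v \<in> {\<rho>}"
    proof (rule ccontr)
      assume "v \<notin> {\<rho>}"
      then have "v \<noteq> \<rho>" by simp
      moreover have rv: "(\<rho>, v) \<in> A\<^sup>*" using reach_all v by (simp add: Vl_iff)
      have "\<exists>p. (p, v) \<in> A" using rv \<open>v \<noteq> \<rho>\<close> by (induction rule: rtrancl_induct) auto
      then obtain p where p: "(p, v) \<in> A" by blast
      then have "r p > real \<sigma>" using v by (simp add: Vl_iff)
      moreover have "r p \<le> real \<sigma>" using rank_le_sigma p AV by blast
      ultimately show False by simp
    qed
  qed
qed

lemma S_rho: "S \<rho> = X"
proof -
  have "x \<in> S \<rho>" if "x \<in> X" for x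
    using that rp_rho by (auto simp: S_iff domi_def)
  moreover have "S \<rho> \<subseteq> X" by (auto simp: S_iff)
  ultimately show ?thesis by blast
qed

lemma H_rho: "H \<rho> = {}"
proof -
  have "H \<rho> \<subseteq> X" by (auto simp: H_iff)
  then show ?thesis using SH_disj[of \<rho>] S_rho by blast
qed

theorem part_top: "SP \<sigma> = {(X, {})}"
  unfolding SPS_def top_level using S_rho H_rho by auto

lemma SP_cases: "P \<in> SP i \<Longrightarrow> \<exists>u \<in> Vl i. P = (S u, H u) \<or> (P = (H u, {}) \<and> H u \<noteq> {})"
  unfolding SPS_def by blast

lemma SP_in1: "u \<in> Vl i \<Longrightarrow> (S u, H u) \<in> SP i" unfolding SPS_def by blast
lemma SP_in2: "u \<in> Vl i \<Longrightarrow> H u \<noteq> {} \<Longrightarrow> (H u, {}) \<in> SP i" unfolding SPS_def by blast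

lemma sp_refl: "sp_le P P" by (cases P) (simp add: sp_le_def)

lemma SP1:
  assumes ij: "i < j" and P: "P \<in> SP i"
  shows "\<exists>P2 \<in> SP j. sp_le P P2"
proof -
  obtain u where u: "u \<in> Vl i" "P = (S u, H u) \<or> (P = (H u, {}) \<and> H u \<noteq> {})" using SP_cases[OF P] by blast
  obtain w where w: "w \<in> Vl j" "(w, u) \<in> A\<^sup>*" using up_level[OF u(1) less_imp_le[OF ij]] by blast
  have uV: "u \<in> V" and wV: "w \<in> V" using u w by (auto simp: Vl_iff)
  note pl = pair_le[OF uV wV w(2)]
  from u(2) show ?thesis
  proof
    assume "P = (S u, H u)"
    then show ?thesis using pl(1) SP_in1[OF w(1)] by blast
  next
    assume h: "P = (H u, {}) \<and> H u \<noteq> {}"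
    then have "sp_le (H u, {}) (S w, H w) \<or> (H w \<noteq> {} \<and> H u = H w)" using pl(2) by blast
    then show ?thesis
    proof
      assume "sp_le (H u, {}) (S w, H w)"
      then show ?thesis using h SP_in1[OF w(1)] by blast
    next
      assume "H w \<noteq> {} \<and> H u = H w"
      then show ?thesis using h SP_in2[OF w(1)] sp_refl by metis
    qed
  qed
qed

lemma SP2_core:
  assumes w: "w \<in> Vl j" and u: "u \<in> Vl i" and ij: "i < j" and HH: "H u = H w" and Hw: "H w \<noteq> {}"
    and nwu: "(w, u) \<notin> A\<^sup>*"
  shows "\<exists>u' \<in> Vl i. H u' = H w \<and> sp_le (S u', H u') (S w, H w)"
proof -
  have uV: "u \<in> V" and wV: "w \<in> V" using u w by (auto simp: Vl_iff)
  have Hu: "H u \<noteq> {}" using HH Hw by simp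
  have uw: "u \<noteq> w" using nwu by auto
  have nuw: "(u, w) \<notin> A\<^sup>*"
  proof
    assume "(u, w) \<in> A\<^sup>*"
    then have "r u > real j" using reach_into_level uw w by blast
    moreover have "r u \<le> real i" using u by (simp add: Vl_iff)
    ultimately show False using ij by simp
  qed
  obtain zw where Kw: "Kprop w zw" using K_exists wV by blast
  obtain zu where Ku: "Kprop u zu" using K_exists uV by blast
  have Hcw: "H w = Lab zw" "(w, zw) \<in> A\<^sup>*" "is_reticulation A zw" using Hchar[OF wV Kw Hw] by auto
  have Hcu: "H u = Lab zu" "(u, zu) \<in> A\<^sup>*" using Hchar[OF uV Ku Hu] by auto
  obtain x where x: "x \<in> H w" using Hw by blast
  have xw: "(w, \<phi> x) \<in> A\<^sup>*" and xu: "(u, \<phi> x) \<in> A\<^sup>*" and xX: "x \<in> X"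
    using x HH by (auto simp: H_iff)
  obtain P0w where P0w: "P0w \<in> rp w" using rp_ex wV by blast
  obtain P0u where P0u: "P0u \<in> rp u" using rp_ex uV by blast
  obtain Qw where Qw: "dpath V A Qw" "hd Qw = w" "last Qw = \<phi> x" using path_ex[OF xw wV] by blast
  obtain Qu where Qu: "dpath V A Qu" "hd Qu = u" "last Qu = \<phi> x" using path_ex[OF xu uV] by blast
  obtain Pw where Pw: "Pw \<in> rp (\<phi> x)" "set Pw = set P0w \<union> set Qw" using rp_concat[OF P0w Qw] by blast
  obtain Pu where Pu: "Pu \<in> rp (\<phi> x)" "set Pu = set P0u \<union> set Qu" using rp_concat[OF P0u Qu] by blast
  have uPw: "u \<notin> set Pw"
  proof
    assume "u \<in> set Pw"
    then have "u \<in> set P0w \<or> u \<in> set Qw" using Pw by blast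
    then show False
    proof
      assume "u \<in> set P0w" then have "(u, w) \<in> A\<^sup>*" using rp_mem_reach[OF P0w] by blast
      then show False using nuw by blast
    next
      assume "u \<in> set Qw" then have "(w, u) \<in> A\<^sup>*" using dpath_mem_reach(1)[OF Qw(1)] Qw by metis
      then show False using nwu by blast
    qed
  qed
  have wPu: "w \<notin> set Pu"
  proof
    assume "w \<in> set Pu"
    then have "w \<in> set P0u \<or> w \<in> set Qu" using Pu by blast
    then show False
    proof
      assume "w \<in> set P0u" then have "(w, u) \<in> A\<^sup>*" using rp_mem_reach[OF P0u] by blast
      then show False using nwu by blast
    next
      assume "w \<in> set Qu" then have "(u, w) \<in> A\<^sup>*" using dpath_mem_reach(1)[OF Qu(1)] Qu by metis
      then show False using nuw by blast
    qed
  qed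
  have zu1: "zu \<in> set Qu" "zu \<in> set Pw" using Ku Qu Pw uPw unfolding Kprop_def by blast+
  have zw1: "zw \<in> set Qw" "zw \<in> set Pu" using Kw Qw Pu wPu unfolding Kprop_def by blast+
  have zuPu: "zu \<in> set Pu" using zu1 Pu by blast
  have zwPw: "zw \<in> set Pw" using zw1 Pw by blast
  obtain Pzu where Pzu: "Pzu \<in> rp zu" "set Pzu \<subseteq> set Pu" using rp_prefix[OF Pu(1) zuPu] by blast
  obtain Pzw where Pzw: "Pzw \<in> rp zw" "set Pzw \<subseteq> set Pw" using rp_prefix[OF Pw(1) zwPw] by blast
  have "zu \<in> set P0w \<or> zu \<in> set Qw" using zu1 Pw by blast
  then have wzu: "(w, zu) \<in> A\<^sup>*"
  proof
    assume "zu \<in> set P0w"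
    then have "(zu, w) \<in> A\<^sup>*" using rp_mem_reach[OF P0w] by blast
    then have "(u, w) \<in> A\<^sup>*" using Hcu(2) rtrancl_trans by metis
    then show ?thesis using nuw by blast
  next
    assume "zu \<in> set Qw" then show ?thesis using dpath_mem_reach(1)[OF Qw(1)] Qw by metis
  qed
  have "zw \<in> set P0u \<or> zw \<in> set Qu" using zw1 Pu by blast
  then have uzw: "(u, zw) \<in> A\<^sup>*"
  proof
    assume "zw \<in> set P0u"
    then have "(zw, u) \<in> A\<^sup>*" using rp_mem_reach[OF P0u] by blast
    then have "(w, u) \<in> A\<^sup>*" using Hcw(2) rtrancl_trans by metis
    then show ?thesis using nwu by blast
  next
    assume "zw \<in> set Qu" then show ?thesis using dpath_mem_reach(1)[OF Qu(1)] Qu by metis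
  qed
  obtain Q1 where Q1: "dpath V A Q1" "hd Q1 = w" "last Q1 = zu" using path_ex[OF wzu wV] by blast
  have "w \<notin> set Pzu" using Pzu wPu by blast
  then have "zw \<in> set Q1" using Kw Q1 Pzu unfolding Kprop_def by blast
  then have zwzu: "(zw, zu) \<in> A\<^sup>*" using dpath_mem_reach(2)[OF Q1(1)] Q1 by metis
  obtain Q2 where Q2: "dpath V A Q2" "hd Q2 = u" "last Q2 = zw" using path_ex[OF uzw uV] by blast
  have "u \<notin> set Pzw" using Pzw uPw by blast
  then have "zu \<in> set Q2" using Ku Q2 Pzw unfolding Kprop_def by blast
  then have "(zu, zw) \<in> A\<^sup>*" using dpath_mem_reach(2)[OF Q2(1)] Q2 by metis
  then have zeq: "zu = zw" using antisym zwzu by blast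
  have rz: "r zw \<le> real i" using r_reach[OF Hcu(2)] zeq u by (simp add: Vl_iff)
  show ?thesis
  proof (cases "r w \<le> real i")
    case True
    have "w \<in> Vl i" using True w ij by (auto simp: Vl_iff)
    then show ?thesis using sp_refl by blast
  next
    case False
    obtain Qz where Qz: "dpath V A Qz" "hd Qz = w" "last Qz = zw" using path_ex[OF Hcw(2) wV] by blast
    have l1: "r (last Qz) \<le> real i" using Qz rz by simp
    have l2: "r (hd Qz) > real i \<or> hd Qz \<in> Vl i" using Qz False by simp
    obtain m where m: "m < length Qz" "Qz ! m \<in> Vl i"
      using first_level[OF Qz(1) l1 l2] by blast
    define u' where "u' = Qz ! m"
    have neQ: "Qz \<noteq> []" using Qz by (simp add: dpath_def)
    have wu': "(w, u') \<in> A\<^sup>*" using dpath_reach[OF Qz(1), of 0 m] m Qz neQ by (simp add: u'_def hd_conv_nth)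
    have u'z: "(u', zw) \<in> A\<^sup>*" using dpath_reach[OF Qz(1), of m "length Qz - 1"] m Qz neQ
      by (simp add: u'_def last_conv_nth)
    have u'V: "u' \<in> V" using m u'_def by (simp add: Vl_iff)
    have u'ne: "u' \<noteq> zw" using Vl_nonret[OF m(2)] Hcw(3) u'_def by auto
    have dwu': "dm w u'"
    proof (rule ccontr)
      assume "\<not> dm w u'"
      then obtain P where P: "P \<in> rp u'" "w \<notin> set P" using nondom_path by blast
      have tk: "dpath V A (take (Suc m) Qz)" "hd (take (Suc m) Qz) = w" "last (take (Suc m) Qz) = u'"
        using dpath_take[OF Qz(1) m(1)] Qz u'_def by auto
      then have "zw \<in> set (take (Suc m) Qz)" using Kw P unfolding Kprop_def by blast
      then have "(zw, u') \<in> A\<^sup>*" using dpath_mem_reach(2)[OF tk(1)] tk by metis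
      then show False using antisym u'z u'ne by blast
    qed
    have "H u' = H w" using case_iv[OF u'V wV dwu' Kw Hw u'z] by blast
    moreover have "sp_le (S u', H u') (S w, H w)" using pair_le(1)[OF u'V wV wu'] .
    ultimately show ?thesis using m u'_def by blast
  qed
qed

end



context RC begin

lemma SP2:
  assumes ij: "i < j" and P2: "(S2, H2) \<in> SP j" and H2: "H2 \<noteq> {}"
    and ex: "\<exists>(S1, H1)\<in>SP i. H1 = H2"
  shows "\<exists>(S1, H1)\<in>SP i. H1 = H2 \<and> sp_le (S1, H1) (S2, H2)"
proof -
  obtain w where w: "w \<in> Vl j" "(S2, H2) = (S w, H w)"
    using SP_cases[OF P2] H2 by auto
  obtain S1 H1 where P1: "(S1, H1) \<in> SP i" "H1 = H2" using ex by blast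
  obtain u where u: "u \<in> Vl i" "(S1, H1) = (S u, H u)"
    using SP_cases[OF P1(1)] P1(2) H2 by auto
  have uV: "u \<in> V" and wV: "w \<in> V" using u w by (auto simp: Vl_iff)
  have HH: "H u = H w" and Hw: "H w \<noteq> {}" using u w P1 H2 by auto
  show ?thesis
  proof (cases "(w, u) \<in> A\<^sup>*")
    case True
    then have "sp_le (S u, H u) (S w, H w)" using pair_le(1)[OF uV wV] by blast
    then show ?thesis using SP_in1[OF u(1)] HH w(2) by auto
  next
    case False
    obtain u' where u': "u' \<in> Vl i" "H u' = H w" "sp_le (S u', H u') (S w, H w)"
      using SP2_core[OF w(1) u(1) ij HH Hw False] by blast
    then show ?thesis using SP_in1[OF u'(1)] w(2) by auto
  qed
qed

lemma above:
  assumes uV: "u \<in> V" and xX: "x \<in> X" and dw: "dm w (\<phi> x)" and ux: "(u, \<phi> x) \<in> A\<^sup>*"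
    and nuw: "(u, w) \<notin> A\<^sup>*"
  shows "(w, u) \<in> A\<^sup>*"
proof -
  obtain P0 where P0: "P0 \<in> rp u" using rp_ex uV by blast
  obtain q where q: "dpath V A q" "hd q = u" "last q = \<phi> x" using path_ex[OF ux uV] by blast
  obtain P where P: "P \<in> rp (\<phi> x)" "set P = set P0 \<union> set q" using rp_concat[OF P0 q] by blast
  have "w \<in> set P" using dw P(1) unfolding domi_def by blast
  then have "w \<in> set P0 \<or> w \<in> set q" using P(2) by blast
  then show ?thesis
  proof
    assume "w \<in> set P0" then show ?thesis using rp_mem_reach[OF P0] by blast
  next
    assume "w \<in> set q" then have "(u, w) \<in> A\<^sup>*" using dpath_mem_reach(1)[OF q(1)] q by metis
    then show ?thesis using nuw by blast
  qed
qed

lemma strict: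
  assumes ij: "i < j" and js: "j \<le> \<sigma>"
  shows "SP i \<noteq> SP j"
proof
  assume eq: "SP i = SP j"
  obtain w where w: "w \<in> Vl j" "r w = real j" using exist_top[OF js] by blast
  have wV: "w \<in> V" using w by (simp add: Vl_iff)
  have "(S w, H w) \<in> SP i" using SP_in1[OF w(1)] eq by simp
  then obtain u where u: "u \<in> Vl i" "(S w, H w) = (S u, H u) \<or> ((S w, H w) = (H u, {}) \<and> H u \<noteq> {})"
    using SP_cases by blast
  have uV: "u \<in> V" using u by (simp add: Vl_iff)
  have ru: "r u \<le> real i" using u by (simp add: Vl_iff)
  have uw: "u \<noteq> w" using ru w ij by auto
  have nuw: "(u, w) \<notin> A\<^sup>*"
  proof
    assume "(u, w) \<in> A\<^sup>*"
    then have "r u > real j" using reach_into_level uw w(1) by blast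
    then show False using ru ij by simp
  qed
  from u(2) show False
  proof
    assume h: "(S w, H w) = (H u, {}) \<and> H u \<noteq> {}"
    then obtain x where x: "x \<in> S w" "x \<in> H u" by auto
    have xX: "x \<in> X" and dw: "dm w (\<phi> x)" using x by (auto simp: S_iff)
    have ux: "(u, \<phi> x) \<in> A\<^sup>*" using x by (simp add: H_iff)
    have wu: "(w, u) \<in> A\<^sup>*" using above[OF uV xX dw ux nuw] .
    have "Lab u \<subseteq> Lab w" using Lab_mono[OF wu] .
    also have "\<dots> = S w \<union> H w" using SH_Lab[OF wV] by simp
    also have "\<dots> = H u" using h by auto
    finally have "S u \<subseteq> H u" using SH_Lab[OF uV] by blast
    then have "S u = {}" using SH_disj[of u] by blast
    then show False using LS[OF uV Vl_nonret[OF u(1)]] by simp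
  next
    assume h: "(S w, H w) = (S u, H u)"
    have "S w \<noteq> {}" using LS[OF wV Vl_nonret[OF w(1)]] .
    then obtain x where x: "x \<in> S w" by blast
    have xX: "x \<in> X" and dw: "dm w (\<phi> x)" using x by (auto simp: S_iff)
    have "dm u (\<phi> x)" using x h by (auto simp: S_iff)
    then have ux: "(u, \<phi> x) \<in> A\<^sup>*" using dom_reach phiV[OF xX] by blast
    have wu: "(w, u) \<in> A\<^sup>*" using above[OF uV xX dw ux nuw] .
    have LL: "Lab u = Lab w" using SH_Lab[OF uV] SH_Lab[OF wV] h by simp
    have nl: "w \<notin> \<phi> ` X"
    proof
      assume "w \<in> \<phi> ` X"
      then obtain x' where "x' \<in> X" "w = \<phi> x'" by blast
      then have "r w = 0" using r_lab by simp
      then show False using w(2) ij by simp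
    qed
    have "\<exists>c'. (w, c') \<in> A \<and> (c', u) \<in> A\<^sup>*" using wu uw
    proof (induction rule: converse_rtrancl_induct)
      case base then show ?case by simp
    next
      case (step y z)
      show ?case using step(1,2) by blast
    qed
    then obtain c' where c': "(w, c') \<in> A" "(c', u) \<in> A\<^sup>*" by blast
    obtain c where c: "(w, c) \<in> A" "c \<noteq> c'" using second_child[OF wV nl Vl_nonret[OF w(1)] c'(1)] by blast
    show False
    proof (cases "(c, u) \<in> A\<^sup>*")
      case True
      obtain Q1 Q2 where C: "cyc_data V A Q1 Q2" "hd Q1 = w" "(last Q1, u) \<in> A\<^sup>*"
        using two_children_cycle[OF c'(1) c(1) c(2)[symmetric] c'(2) True] by blast
      have "\<forall>x\<in>X. (hd Q1, \<phi> x) \<in> A\<^sup>* \<longrightarrow> (u, \<phi> x) \<in> A\<^sup>*"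
      proof (intro ballI impI)
        fix x assume "x \<in> X" "(hd Q1, \<phi> x) \<in> A\<^sup>*"
        then have "x \<in> Lab w" using C(2) by (simp add: Lab_def)
        then have "x \<in> Lab u" using LL by simp
        then show "(u, \<phi> x) \<in> A\<^sup>*" by (simp add: Lab_def)
      qed
      then show False using G[OF C(1) C(3)] by blast
    next
      case False
      have cV: "c \<in> V" using c AV by blast
      obtain xl where xl: "xl \<in> X" "(c, \<phi> xl) \<in> A\<^sup>*" using lab_ex cV by blast
      obtain qc where qc: "dpath V A qc" "hd qc = c" "last qc = \<phi> xl" using path_ex[OF xl(2) cV] by blast
      have qcne: "qc \<noteq> []" using qc by (simp add: dpath_def)
      define Q where "Q = w # qc"
      have dQ: "dpath V A Q" "hd Q = w" "last Q = \<phi> xl" using qc c wV qcne by (auto simp: Q_def dpath_Cons)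
      have Q1: "Q ! 1 = c" using qc qcne by (simp add: Q_def hd_conv_nth)
      obtain P0w where P0w: "P0w \<in> rp w" using rp_ex wV by blast
      obtain P where P: "P \<in> rp (\<phi> xl)" "set P = set P0w \<union> set Q" using rp_concat[OF P0w dQ] by blast
      have "u \<notin> set P"
      proof
        assume "u \<in> set P"
        then have "u \<in> set P0w \<or> u = w \<or> u \<in> set qc" using P by (auto simp: Q_def)
        then show False
        proof (elim disjE)
          assume "u \<in> set P0w" then show False using rp_mem_reach[OF P0w] nuw by blast
        next
          assume "u = w" then show False using uw by simp
        next
          assume "u \<in> set qc" then have "(c, u) \<in> A\<^sup>*" using dpath_mem_reach(1)[OF qc(1)] qc by metis
          then show False using False by blast
        qed
      qed
      then have "\<not> dm u (\<phi> xl)" using P by (auto simp: domi_def)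
      moreover have "(w, \<phi> xl) \<in> A\<^sup>*" using c(1) xl(2) converse_rtrancl_into_rtrancl by metis
      then have "xl \<in> Lab w" using xl by (simp add: Lab_def)
      then have "xl \<in> Lab u" using LL by simp
      then have uxl: "(u, \<phi> xl) \<in> A\<^sup>*" by (simp add: Lab_def)
      ultimately have "xl \<in> H u" using xl uV by (simp add: H_iff)
      then have "xl \<in> H w" using h by simp
      then have "\<not> dm w (\<phi> xl)" by (simp add: H_iff)
      then obtain P' where P': "P' \<in> rp (\<phi> xl)" "w \<notin> set P'" using nondom_path by blast
      obtain R1 R2 where R: "cyc_data V A R1 R2" "(w, Q ! 1) \<in> carcs R1 R2" "w \<noteq> hd R1"
        using inst_cycle[OF wV P0w dQ P'] by blast
      have c'xl: "(c', \<phi> xl) \<in> A\<^sup>*" using c'(2) uxl rtrancl_trans by metis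
      obtain C1 C2 where C: "cyc_data V A C1 C2" "(w, c) \<in> carcs C1 C2" "(w, c') \<in> carcs C1 C2"
        using two_children_cycle[OF c(1) c'(1) c(2) xl(2) c'xl] by blast
      have "carcs C1 C2 = carcs R1 R2"
        using ret_eq[OF cyc_data_ret[OF C(1)] cyc_data_ret[OF R(1)] C(2)] R(2) Q1 by simp
      then have "w = hd R1" using I2[OF acyc R(1), of w c c'] C c(2) by simp
      then show False using R(3) by simp
    qed
  qed
qed

theorem main_locale:
  "(\<forall>i j. i < j \<and> j \<le> \<sigma> \<longrightarrow> sps_less (SP i) (SP j)) \<and> SP \<sigma> = {(X, {})}"
proof (intro conjI allI impI)
  show "SP \<sigma> = {(X, {})}" by (rule part_top)
  fix i j assume ij: "i < j \<and> j \<le> \<sigma>"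
  have le: "sps_le (SP i) (SP j)"
    unfolding sps_le_def
  proof (intro conjI ballI)
    fix P1 assume "P1 \<in> SP i"
    then show "\<exists>P2\<in>SP j. sp_le P1 P2" using SP1 ij by blast
  next
    fix P2 assume P2: "P2 \<in> SP j"
    obtain S2 H2 where P2e: "P2 = (S2, H2)" by (cases P2)
    show "case P2 of (S2, H2) \<Rightarrow> H2 \<noteq> {} \<longrightarrow> (\<exists>(S1, H1)\<in>SP i. H1 = H2) \<longrightarrow>
            (\<exists>(S1, H1)\<in>SP i. H1 = H2 \<and> sp_le (S1, H1) (S2, H2))"
      using SP2[of i j S2 H2] ij P2 P2e by auto
  qed
  then show "sps_less (SP i) (SP j)" using strict ij by (simp add: sps_less_def)
qed

end


theorem mainTheorem4:
  fixes X :: "'x set" and V :: "'v set" and A :: "('v \<times> 'v) set" and \<rho> :: 'v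
    and \<phi> :: "'x \<Rightarrow> 'v" and r :: "'v \<Rightarrow> real"
  assumes "ranked_cactus X V A \<rho> \<phi> r"
  shows "(\<forall>i j. i < j \<and> j \<le> size_ts V r \<longrightarrow>
            sps_less (SPS X V A \<rho> \<phi> r i) (SPS X V A \<rho> \<phi> r j))
         \<and> SPS X V A \<rho> \<phi> r (size_ts V r) = {(X, {})}"
proof -
  interpret RC X V A \<rho> \<phi> r by unfold_locales (rule assms)
  show ?thesis using main_locale by simp
qed

end
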